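(* For any integer $k>0$, there is a logspace many-one reduction $f$ from SAT to monotone NAE$(3k+3)$SAT such that: if $I$ is an unsatisfiable SAT instance then $f(I)$ is not NAE-satisfiable, and if $I$ is a satisfiable SAT instance then $f(I)$ is $k$-robustly NAE-satisfiable.
   Context: SAT is the problem of deciding satisfiability of a propositional formula in conjunctive normal form. An instance of monotone NAE$m$SAT is a finite set of clauses, each a disjunction of $m$ (unnegated) variables; a truth assignment NAE-satisfies it if in every clause at least one variable is assigned $1$ and at least one is assigned $0$. Equivalently, it is an instance of the constraint satisfaction problem over the domain $\{0,1\}$ with the single $m$-ary relation $N_m=\{0,1\}^m\setminus\{(0,\dots,0),(1,\dots,1)\}$. A partial truth assignment $p$ on a set $Y$ of variables is locally compatible if for every clause $(y_1\vee\dots\vee y_m)$ and every set of positions $\{i_1<\dots<i_t\}$ with $y_{i_1},\dots,y_{i_t}\in Y$, the tuple $(p(y_{i_1}),\dots,p(y_{i_t}))$ lies in the projection of $N_m$ onto coordinates $i_1,\dots,i_t$. An instance is $k$-robustly NAE-satisfiable if every locally compatible partial truth assignment on any $k$ variables extends to a NAE-satisfying truth assignment of all variables. *)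

theory Defs
  imports Main "HOL-Library.Discrete_Functions"
begin

text \<open>A literal is a pair (polarity, variable); True = unnegated.
  A SAT instance is a CNF formula, i.e. a list of clauses (lists of literals).\<close>
type_synonym lit = "bool \<times> nat"
type_synonym cnf = "lit list list"

definition cnf_sat :: "cnf \<Rightarrow> bool" where
  "cnf_sat F \<longleftrightarrow> (\<exists>a :: nat \<Rightarrow> bool. \<forall>C \<in> set F. \<exists>(b, v) \<in> set C. a v = b)"

text \<open>A monotone NAE instance: a list of clauses, each a list of (unnegated) variables.
  It is an NAE-m-SAT instance if every clause has exactly m variable positions.\<close>
type_synonym nae = "nat list list"

definition is_nae_m :: "nat \<Rightarrow> nae \<Rightarrow> bool" where
  "is_nae_m m G \<longleftrightarrow> (\<forall>C \<in> set G. length C = m)"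

definition nae_vars :: "nae \<Rightarrow> nat set" where
  "nae_vars G = (\<Union>C \<in> set G. set C)"

definition nae_sat_by :: "nae \<Rightarrow> (nat \<Rightarrow> bool) \<Rightarrow> bool" where
  "nae_sat_by G a \<longleftrightarrow> (\<forall>C \<in> set G. (\<exists>x \<in> set C. a x) \<and> (\<exists>x \<in> set C. \<not> a x))"

definition nae_sat :: "nae \<Rightarrow> bool" where
  "nae_sat G \<longleftrightarrow> (\<exists>a. nae_sat_by G a)"

text \<open>Local compatibility of a partial assignment p on Y: for every clause C (of length m) and every
  set S of positions whose variables lie in Y, the tuple (p (C!i))_{i\<in>S} lies in the projection of
  N_m = {0,1}^m - {0...0, 1...1} onto S, i.e. some t \<in> N_m agrees with it on S.\<close>
definition loc_compat :: "nae \<Rightarrow> nat set \<Rightarrow> (nat \<Rightarrow> bool) \<Rightarrow> bool" where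
  "loc_compat G Y p \<longleftrightarrow>
     (\<forall>C \<in> set G. \<forall>S. S \<subseteq> {i. i < length C \<and> C ! i \<in> Y} \<longrightarrow>
        (\<exists>t :: nat \<Rightarrow> bool. (\<exists>i < length C. t i) \<and> (\<exists>i < length C. \<not> t i) \<and>
                            (\<forall>i \<in> S. t i = p (C ! i))))"

definition robust_nae_sat :: "nat \<Rightarrow> nae \<Rightarrow> bool" where
  "robust_nae_sat k G \<longleftrightarrow>
     (\<forall>Y p. Y \<subseteq> nae_vars G \<and> card Y = k \<and> loc_compat G Y p \<longrightarrow>
        (\<exists>a. nae_sat_by G a \<and> (\<forall>y \<in> Y. a y = p y)))"

datatype sym = S0 | S1 | SNeg | SEndLit | SEndClause

fun bin :: "nat \<Rightarrow> sym list" where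
  "bin n = (if n < 2 then [if n = 0 then S0 else S1]
            else (if n mod 2 = 0 then S0 else S1) # bin (n div 2))"

definition enc_lit :: "lit \<Rightarrow> sym list" where
  "enc_lit l = (if fst l then [] else [SNeg]) @ bin (snd l) @ [SEndLit]"

definition enc_cnf :: "cnf \<Rightarrow> sym list" where
  "enc_cnf F = concat (map (\<lambda>C. concat (map enc_lit C) @ [SEndClause]) F)"

definition enc_nae :: "nae \<Rightarrow> sym list" where
  "enc_nae G = concat (map (\<lambda>C. concat (map (\<lambda>v. bin v @ [SEndLit]) C) @ [SEndClause]) G)"

text \<open>A deterministic machine with a two-way read-only input tape (with end markers, read as None),
  one work tape over the alphabet {0..<nwork} (0 = blank), and a one-way write-only output tape.  The transition gives: new state, input head move, symbol written on the
  work tape, work head move, optional output symbol.\<close>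
datatype dir = L | N | R

datatype ltm = LTM (nstates: nat) (nwork: nat) (start: nat) (halting: "nat \<Rightarrow> bool")
  (delta: "nat \<Rightarrow> sym option \<Rightarrow> nat \<Rightarrow> nat \<times> dir \<times> nat \<times> dir \<times> sym option")

definition wf_ltm :: "ltm \<Rightarrow> bool" where
  "wf_ltm M \<longleftrightarrow> 0 < nwork M \<and> start M < nstates M \<and>
     (\<forall>q s w. q < nstates M \<and> w < nwork M \<longrightarrow>
        (case delta M q s w of (q', _, w', _, _) \<Rightarrow> q' < nstates M \<and> w' < nwork M))"

text \<open>Configuration: state, input head (0 and length x + 1 are the end markers), work tape contents,
  work head, output produced so far.\<close>
type_synonym config = "nat \<times> nat \<times> (nat \<Rightarrow> nat) \<times> nat \<times> sym list"

definition read_in :: "sym list \<Rightarrow> nat \<Rightarrow> sym option" where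
  "read_in x i = (if 1 \<le> i \<and> i \<le> length x then Some (x ! (i - 1)) else None)"

fun move :: "dir \<Rightarrow> nat \<Rightarrow> nat" where
  "move L i = i - 1" | "move N i = i" | "move R i = Suc i"

definition step :: "ltm \<Rightarrow> sym list \<Rightarrow> config \<Rightarrow> config" where
  "step M x c = (case c of (q, ih, wt, wh, out) \<Rightarrow>
     if halting M q then c else
     (case delta M q (read_in x ih) (wt wh) of (q', di, w, dw, ou) \<Rightarrow>
        (q', min (move di ih) (Suc (length x)), wt(wh := w), move dw wh,
         out @ (case ou of None \<Rightarrow> [] | Some s \<Rightarrow> [s]))))"

definition init_config :: "ltm \<Rightarrow> config" where
  "init_config M = (start M, 0, \<lambda>_. 0, 0, [])"

definition run :: "ltm \<Rightarrow> sym list \<Rightarrow> nat \<Rightarrow> config" where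
  "run M x t = (step M x ^^ t) (init_config M)"

definition computes_in_space :: "ltm \<Rightarrow> sym list \<Rightarrow> sym list \<Rightarrow> nat \<Rightarrow> bool" where
  "computes_in_space M x y s \<longleftrightarrow>
     (\<exists>t. (case run M x t of (q, _, _, _, out) \<Rightarrow> halting M q \<and> out = y) \<and>
          (\<forall>t' \<le> t. (case run M x t' of (_, _, _, wh, _) \<Rightarrow> wh < s)))"

definition logspace_reduction_SAT_NAE :: "nat \<Rightarrow> (cnf \<Rightarrow> nae) \<Rightarrow> bool" where
  "logspace_reduction_SAT_NAE m g \<longleftrightarrow>
     (\<forall>I. is_nae_m m (g I)) \<and> (\<forall>I. cnf_sat I \<longleftrightarrow> nae_sat (g I)) \<and>
     (\<exists>M c. wf_ltm M \<and>
        (\<forall>I. computes_in_space M (enc_cnf I) (enc_nae (g I))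
               (c * floor_log (length (enc_cnf I) + 2) + c)))"

end

theory Submission
  imports Defs "HOL-Library.Countable"
begin

definition NN :: "nat \<Rightarrow> nat" where "NN k = 2*k+1"
definition Fk :: "nat \<Rightarrow> nat list list" where
  "Fk k = filter (sorted_wrt (<)) (List.n_lists (k+1) [0..<NN k])"
definition CB :: "nat \<Rightarrow> nat list list" where
  "CB k = concat (map (\<lambda>A. concat (map (\<lambda>B. map (\<lambda>C. A @ B @ C) (Fk k)) (Fk k))) (Fk k))"
definition QQ :: "nat \<Rightarrow> nat" where "QQ k = 3*(k+1)"
definition cname :: "nat \<Rightarrow> nat \<Rightarrow> nat \<Rightarrow> nat" where "cname k j v = j + 2^(NN k) * v"
definition vcode :: "nat \<Rightarrow> nat \<Rightarrow> nat" where "vcode kd p = kd + 8*p"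

datatype desc = DZ | DP | DQ | DD bool | DE bool

fun dval :: "nat \<Rightarrow> nat \<Rightarrow> desc \<Rightarrow> nat" where
  "dval x c DZ = vcode 0 1"
| "dval x c DP = vcode 1 (x+1)"
| "dval x c DQ = vcode 2 (x+1)"
| "dval x c (DD b) = vcode 3 (c + (if b then 1 else 0))"
| "dval x c (DE b) = vcode 4 (c + (if b then 1 else 0))"

definition tnth :: "'a \<times> 'a \<times> 'a \<Rightarrow> nat \<Rightarrow> 'a" where
  "tnth t i = [fst t, fst (snd t), snd (snd t)] ! i"

definition amp :: "nat \<Rightarrow> nat \<times> nat \<times> nat \<Rightarrow> nae" where
  "amp k t = map (\<lambda>J. map (\<lambda>q. cname k (J!q) (tnth t (q div (k+1)))) [0..<QQ k]) (CB k)"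

definition dl :: "bool \<Rightarrow> desc" where "dl pol = (if pol then DP else DQ)"

definition lit_trs :: "bool \<Rightarrow> bool \<Rightarrow> (desc \<times> desc \<times> desc) list" where
  "lit_trs f pol = [(DP,DQ,DQ), (if f then (DE True, dl pol, DZ) else (DD False, dl pol, DE True)),
                    (DD True, DE True, DE True)]"

definition tval :: "nat \<Rightarrow> nat \<Rightarrow> desc \<times> desc \<times> desc \<Rightarrow> nat \<times> nat \<times> nat" where
  "tval x c t = (dval x c (fst t), dval x c (fst (snd t)), dval x c (snd (snd t)))"

fun g0_lits :: "bool \<Rightarrow> nat \<Rightarrow> lit list \<Rightarrow> (nat \<times> nat \<times> nat) list" where
  "g0_lits f c [] = []"
| "g0_lits f c (l#ls) = map (tval (snd l) c) (lit_trs f (fst l)) @ g0_lits False (Suc c) ls"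

definition endtr :: "lit list \<Rightarrow> desc \<times> desc \<times> desc" where
  "endtr C = (if C = [] then (DZ,DZ,DZ) else (DD False, DZ, DZ))"

fun g0_cnf :: "nat \<Rightarrow> cnf \<Rightarrow> (nat \<times> nat \<times> nat) list" where
  "g0_cnf c [] = []"
| "g0_cnf c (C#F) = g0_lits True c C @ [tval 0 (c + length C) (endtr C)] @ g0_cnf (c + length C) F"

definition gred :: "nat \<Rightarrow> cnf \<Rightarrow> nae" where
  "gred k I = concat (map (amp k) (g0_cnf 1 I))"

definition NAE3 :: "(nat \<Rightarrow> bool) \<Rightarrow> nat \<times> nat \<times> nat \<Rightarrow> bool" where
  "NAE3 s t = (\<not> (s (fst t) = s (fst (snd t)) \<and> s (fst (snd t)) = s (snd (snd t))))"

definition lsat :: "(nat \<Rightarrow> bool) \<Rightarrow> lit \<Rightarrow> bool" where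
  "lsat \<sigma> l = (\<sigma> (snd l) = fst l)"

definition sD :: "(nat \<Rightarrow> bool) \<Rightarrow> (nat \<Rightarrow> bool) \<Rightarrow> nat \<Rightarrow> bool" where
  "sD \<sigma> D n = (if n mod 8 = 0 then False else if n mod 8 = 1 then \<sigma> (n div 8 - 1)
      else if n mod 8 = 2 then \<not> \<sigma> (n div 8 - 1) else if n mod 8 = 3 then D (n div 8)
      else \<not> D (n div 8))"

lemma sD_vcode[simp]: "kd < 8 \<Longrightarrow> sD \<sigma> D (vcode kd p) = (if kd = 0 then False else if kd = 1 then \<sigma> (p - 1)
   else if kd = 2 then \<not> \<sigma> (p - 1) else if kd = 3 then D p else \<not> D p)"
proof -
  assume "kd < 8"
  then have "(kd + 8*p) mod 8 = kd" "(kd + 8*p) div 8 = p" by auto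
  then show ?thesis unfolding sD_def vcode_def by (simp only:)
qed

lemma sD_dl[simp]: "sD \<sigma> D (dval x c (dl pol)) = lsat \<sigma> (pol, x)"
  by (cases pol) (auto simp: dl_def lsat_def)

lemma g0_lits_complete:
  "(\<forall>m < length ls. D (c+1+m) = ((\<not> f \<and> D c) \<or> (\<exists>l\<in>set (take (m+1) ls). lsat \<sigma> l))) \<Longrightarrow>
   \<forall>t \<in> set (g0_lits f c ls). NAE3 (sD \<sigma> D) t"
proof (induction ls arbitrary: f c)
  case Nil then show ?case by simp
next
  case (Cons l ls)
  obtain pol x where l: "l = (pol, x)" by (cases l)
  have D1: "D (c+1) = ((\<not> f \<and> D c) \<or> lsat \<sigma> l)" using Cons.prems[rule_format, of 0] by simp
  have IH: "\<forall>t \<in> set (g0_lits False (Suc c) ls). NAE3 (sD \<sigma> D) t"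
  proof (rule Cons.IH, intro allI impI)
    fix m assume "m < length ls"
    then have "D (c+1+(Suc m)) = ((\<not> f \<and> D c) \<or> (\<exists>l'\<in>set (take (Suc m+1) (l#ls)). lsat \<sigma> l'))"
      using Cons.prems by auto
    then show "D (Suc c + 1 + m) = ((\<not> False \<and> D (Suc c)) \<or> (\<exists>l\<in>set (take (m + 1) ls). lsat \<sigma> l))"
      using D1 by auto
  qed
  have H: "\<forall>t\<in>set (map (tval x c) (lit_trs f pol)). NAE3 (sD \<sigma> D) t"
    using D1 l by (cases f; simp add: lit_trs_def tval_def NAE3_def; blast)
  show ?case unfolding l g0_lits.simps fst_conv snd_conv set_append ball_Un using H IH by blast
qed

fun dcnf :: "(nat \<Rightarrow> bool) \<Rightarrow> nat \<Rightarrow> cnf \<Rightarrow> nat \<Rightarrow> bool" where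
  "dcnf \<sigma> c [] i = False"
| "dcnf \<sigma> c (C#F) i = (if c < i \<and> i \<le> c + length C then (\<exists>l\<in>set (take (i-c) C). lsat \<sigma> l)
      else dcnf \<sigma> (c + length C) F i)"

lemma g0_cnf_complete:
  "(\<forall>C\<in>set I. \<exists>l\<in>set C. lsat \<sigma> l) \<Longrightarrow> (\<forall>i. c < i \<longrightarrow> D i = dcnf \<sigma> c I i) \<Longrightarrow>
   \<forall>t \<in> set (g0_cnf c I). NAE3 (sD \<sigma> D) t"
proof (induction I arbitrary: c)
  case Nil then show ?case by simp
next
  case (Cons C F)
  have A: "\<forall>t \<in> set (g0_lits True c C). NAE3 (sD \<sigma> D) t"
  proof (rule g0_lits_complete, intro allI impI)
    fix m assume "m < length C"
    then show "D (c + 1 + m) = ((\<not> True \<and> D c) \<or> (\<exists>l\<in>set (take (m + 1) C). lsat \<sigma> l))"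
      using Cons.prems(2)[rule_format, of "c+1+m"] by simp
  qed
  have B: "\<forall>t \<in> set (g0_cnf (c + length C) F). NAE3 (sD \<sigma> D) t"
  proof (rule Cons.IH)
    show "\<forall>C\<in>set F. \<exists>l\<in>set C. lsat \<sigma> l" using Cons.prems(1) by simp
    show "\<forall>i. c + length C < i \<longrightarrow> D i = dcnf \<sigma> (c + length C) F i"
      using Cons.prems(2) by auto
  qed
  have C: "C \<noteq> []" using Cons.prems(1) by auto
  have E: "D (c + length C) = True"
    using Cons.prems(1) Cons.prems(2)[rule_format, of "c + length C"] C by auto
  have E': "NAE3 (sD \<sigma> D) (tval 0 (c + length C) (endtr C))"
    using C E by (simp add: endtr_def tval_def NAE3_def)
  show ?case unfolding g0_cnf.simps set_append ball_Un using A B E' by simp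
qed

lemma cnf_sat_g0:
  assumes "cnf_sat I" shows "\<exists>s. \<forall>t \<in> set (g0_cnf 1 I). NAE3 s t"
proof -
  obtain \<sigma> where s: "\<forall>C \<in> set I. \<exists>(b, v) \<in> set C. \<sigma> v = b" using assms cnf_sat_def by auto
  have "\<forall>C\<in>set I. \<exists>l\<in>set C. lsat \<sigma> l" using s by (force simp: lsat_def)
  then show ?thesis using g0_cnf_complete[of I \<sigma> 1 "dcnf \<sigma> 1 I"] by blast
qed

lemma g0_lits_sound:
  "ls \<noteq> [] \<Longrightarrow> \<forall>t \<in> set (g0_lits f c ls). NAE3 s t \<Longrightarrow> s (vcode 0 1) = False \<Longrightarrow>
   s (vcode 3 (c + length ls)) \<Longrightarrow>
   (\<exists>l\<in>set ls. lsat (\<lambda>x. s (vcode 1 (x+1))) l) \<or> (\<not> f \<and> s (vcode 3 c))"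
proof (induction ls arbitrary: f c)
  case Nil then show ?case by simp
next
  case (Cons l ls)
  obtain pol x where l: "l = (pol, x)" by (cases l)
  have T: "NAE3 s t" if "t \<in> set (map (tval x c) (lit_trs f pol))" for t
    using Cons.prems(2) that unfolding l g0_lits.simps fst_conv snd_conv set_append ball_Un by blast
  have t1: "s (vcode 2 (x+1)) = (\<not> s (vcode 1 (x+1)))"
    using T[of "tval x c (DP,DQ,DQ)"] by (simp add: lit_trs_def tval_def NAE3_def)
  have t3: "s (vcode 4 (c+1)) = (\<not> s (vcode 3 (c+1)))"
    using T[of "tval x c (DD True, DE True, DE True)"] by (simp add: lit_trs_def tval_def NAE3_def)
  have t2: "s (vcode 3 (c+1)) \<Longrightarrow> lsat (\<lambda>x. s (vcode 1 (x+1))) l \<or> (\<not> f \<and> s (vcode 3 c))"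
    using T[of "tval x c (if f then (DE True, dl pol, DZ) else (DD False, dl pol, DE True))"]
      t1 t3 Cons.prems(3) l
    by (cases f; cases pol; simp add: lit_trs_def tval_def NAE3_def dl_def lsat_def; blast)
  show ?case
  proof (cases "ls = []")
    case True
    then show ?thesis using t2 Cons.prems(4) by auto
  next
    case False
    have "(\<exists>l\<in>set ls. lsat (\<lambda>x. s (vcode 1 (x+1))) l) \<or> (\<not> False \<and> s (vcode 3 (Suc c)))"
      using Cons.IH[OF False, of False "Suc c"] Cons.prems l by auto
    then show ?thesis using t2 by auto
  qed
qed

lemma g0_cnf_sound:
  "\<forall>t \<in> set (g0_cnf c I). NAE3 s t \<Longrightarrow> s (vcode 0 1) = False \<Longrightarrow>
   \<forall>C\<in>set I. \<exists>l\<in>set C. lsat (\<lambda>x. s (vcode 1 (x+1))) l"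
proof (induction I arbitrary: c)
  case Nil then show ?case by simp
next
  case (Cons C F)
  have E: "NAE3 s (tval 0 (c + length C) (endtr C))" using Cons.prems(1)
    unfolding g0_cnf.simps set_append ball_Un by simp
  have CN: "C \<noteq> []" using E by (auto simp: endtr_def tval_def NAE3_def)
  have "s (vcode 3 (c + length C))" using E CN Cons.prems(2) by (auto simp: endtr_def tval_def NAE3_def)
  then have "\<exists>l\<in>set C. lsat (\<lambda>x. s (vcode 1 (x+1))) l"
    using g0_lits_sound[OF CN, of True c s] Cons.prems
    unfolding g0_cnf.simps set_append ball_Un by simp
  moreover have "\<forall>t \<in> set (g0_cnf (c + length C) F). NAE3 s t" using Cons.prems(1)
    unfolding g0_cnf.simps set_append ball_Un by simp
  ultimately show ?case using Cons.IH[of "c + length C"] Cons.prems(2) by simp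
qed

lemma g0_sat_cnf:
  assumes "\<forall>t \<in> set (g0_cnf 1 I). NAE3 s t" shows "cnf_sat I"
proof -
  define s' where "s' = (if s (vcode 0 1) then (\<lambda>n. \<not> s n) else s)"
  have "\<forall>t \<in> set (g0_cnf 1 I). NAE3 s' t" using assms unfolding s'_def NAE3_def by (cases "s (vcode 0 1)") auto
  moreover have "s' (vcode 0 1) = False" by (simp add: s'_def)
  ultimately have "\<forall>C\<in>set I. \<exists>l\<in>set C. lsat (\<lambda>x. s' (vcode 1 (x+1))) l" by (rule g0_cnf_sound)
  then have L: "\<forall>C\<in>set I. \<exists>l\<in>set C. lsat (\<lambda>x. s' (vcode 1 (x+1))) l" .
  show ?thesis unfolding cnf_sat_def
  proof (intro exI ballI)
    fix C assume "C \<in> set I"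
    then obtain l where l: "l \<in> set C" "lsat (\<lambda>x. s' (vcode 1 (x+1))) l" using L by blast
    obtain b v where "l = (b, v)" by (cases l)
    then show "\<exists>(b, v)\<in>set C. s' (vcode 1 (v+1)) = b" using l by (auto simp: lsat_def)
  qed
qed

lemma Fk_mem: "A \<in> set (Fk k) \<longleftrightarrow> length A = k+1 \<and> set A \<subseteq> {..<NN k} \<and> sorted_wrt (<) A"
  unfolding Fk_def set_filter set_n_lists by auto

lemma Fk_pick:
  assumes "S \<subseteq> {..<NN k}" "k+1 \<le> card S"
  shows "\<exists>A\<in>set (Fk k). set A \<subseteq> S"
proof -
  have fS: "finite S" using assms(1) finite_subset by blast
  obtain T where T: "T \<subseteq> S" "card T = k+1" using obtain_subset_with_card_n[OF assms(2)] by blast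
  have fT: "finite T" using T(1) fS finite_subset by blast
  define A where "A = sorted_list_of_set T"
  have "set A = T" using fT by (simp add: A_def)
  moreover have "length A = k+1" using fT T(2) by (simp add: A_def)
  moreover have "sorted_wrt (<) A" by (simp add: A_def)
  ultimately show ?thesis using T(1) assms(1) by (auto simp: Fk_mem)
qed

lemma CB_mem: "J \<in> set (CB k) \<longleftrightarrow> (\<exists>A\<in>set (Fk k). \<exists>B\<in>set (Fk k). \<exists>C\<in>set (Fk k). J = A @ B @ C)"
  by (auto simp: CB_def)

lemma amp_clause:
  assumes "length A = k+1" "length B = k+1" "length C = k+1"
  shows "map (\<lambda>q. cname k ((A@B@C)!q) (tnth (a,b,c) (q div (k+1)))) [0..<QQ k]
       = map (\<lambda>j. cname k j a) A @ map (\<lambda>j. cname k j b) B @ map (\<lambda>j. cname k j c) C"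
proof (rule nth_equalityI)
  show "length (map (\<lambda>q. cname k ((A@B@C)!q) (tnth (a,b,c) (q div (k+1)))) [0..<QQ k]) =
        length (map (\<lambda>j. cname k j a) A @ map (\<lambda>j. cname k j b) B @ map (\<lambda>j. cname k j c) C)"
    using assms by (simp add: QQ_def)
  fix q assume "q < length (map (\<lambda>q. cname k ((A@B@C)!q) (tnth (a,b,c) (q div (k+1)))) [0..<QQ k])"
  then have q: "q < 3*(k+1)" by (simp add: QQ_def)
  consider "q < k+1" | "k+1 \<le> q" "q < 2*(k+1)" | "2*(k+1) \<le> q" by linarith
  then show "map (\<lambda>q. cname k ((A@B@C)!q) (tnth (a,b,c) (q div (k+1)))) [0..<QQ k] ! q =
        (map (\<lambda>j. cname k j a) A @ map (\<lambda>j. cname k j b) B @ map (\<lambda>j. cname k j c) C) ! q"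
  proof cases
    case 1
    then show ?thesis using q assms by (simp add: QQ_def nth_append tnth_def)
  next
    case 2
    then have d: "q div (k+1) = 1" by (simp add: div_nat_eqI)
    have "q - (k+1) < k+1" using 2 by simp
    then show ?thesis using 2 q assms d by (simp add: QQ_def nth_append tnth_def)
  next
    case 3
    then have d: "q div (k+1) = 2" using q by (simp add: div_nat_eqI)
    have "q - (k+1) - (k+1) < k+1" "\<not> q - (k+1) < k+1" using 3 q by auto
    then show ?thesis using 3 q assms d by (simp add: QQ_def nth_append tnth_def)
  qed
qed

lemma amp_mem:
  "cl \<in> set (amp k (a,b,c)) \<longleftrightarrow> (\<exists>A\<in>set (Fk k). \<exists>B\<in>set (Fk k). \<exists>C\<in>set (Fk k).
      cl = map (\<lambda>j. cname k j a) A @ map (\<lambda>j. cname k j b) B @ map (\<lambda>j. cname k j c) C)"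
proof -
  have "cl \<in> set (amp k (a,b,c)) \<longleftrightarrow> (\<exists>J\<in>set (CB k). cl = map (\<lambda>q. cname k (J!q) (tnth (a,b,c) (q div (k+1)))) [0..<QQ k])"
    by (auto simp: amp_def)
  also have "\<dots> \<longleftrightarrow> (\<exists>A\<in>set (Fk k). \<exists>B\<in>set (Fk k). \<exists>C\<in>set (Fk k).
      cl = map (\<lambda>j. cname k j a) A @ map (\<lambda>j. cname k j b) B @ map (\<lambda>j. cname k j c) C)"
  proof
    assume "\<exists>J\<in>set (CB k). cl = map (\<lambda>q. cname k (J!q) (tnth (a,b,c) (q div (k+1)))) [0..<QQ k]"
    then obtain J where J: "J\<in>set (CB k)" "cl = map (\<lambda>q. cname k (J!q) (tnth (a,b,c) (q div (k+1)))) [0..<QQ k]"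
      by blast
    from J(1) obtain A B C where ABC: "A\<in>set (Fk k)" "B\<in>set (Fk k)" "C\<in>set (Fk k)" "J = A@B@C"
      unfolding CB_mem by blast
    from J(2) ABC(4) have "cl = map (\<lambda>q. cname k ((A@B@C)!q) (tnth (a,b,c) (q div (k+1)))) [0..<QQ k]"
      by simp
    moreover have "length A = k+1" "length B = k+1" "length C = k+1" using ABC by (auto simp: Fk_mem)
    ultimately have "cl = map (\<lambda>j. cname k j a) A @ map (\<lambda>j. cname k j b) B @ map (\<lambda>j. cname k j c) C"
      using amp_clause[of A k B C a b c] by simp
    then show "\<exists>A\<in>set (Fk k). \<exists>B\<in>set (Fk k). \<exists>C\<in>set (Fk k).
      cl = map (\<lambda>j. cname k j a) A @ map (\<lambda>j. cname k j b) B @ map (\<lambda>j. cname k j c) C"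
      using ABC by blast
  next
    assume "\<exists>A\<in>set (Fk k). \<exists>B\<in>set (Fk k). \<exists>C\<in>set (Fk k).
      cl = map (\<lambda>j. cname k j a) A @ map (\<lambda>j. cname k j b) B @ map (\<lambda>j. cname k j c) C"
    then obtain A B C where ABC: "A\<in>set (Fk k)" "B\<in>set (Fk k)" "C\<in>set (Fk k)"
       and "cl = map (\<lambda>j. cname k j a) A @ map (\<lambda>j. cname k j b) B @ map (\<lambda>j. cname k j c) C"
      by blast
    moreover have "A@B@C \<in> set (CB k)" using ABC unfolding CB_mem by blast
    moreover have "length A = k+1" "length B = k+1" "length C = k+1" using ABC by (auto simp: Fk_mem)
    ultimately have "A@B@C \<in> set (CB k)" "cl = map (\<lambda>q. cname k ((A@B@C)!q) (tnth (a,b,c) (q div (k+1)))) [0..<QQ k]"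
      using amp_clause[of A k B C a b c] by simp_all
    then show "\<exists>J\<in>set (CB k). cl = map (\<lambda>q. cname k (J!q) (tnth (a,b,c) (q div (k+1)))) [0..<QQ k]"
      by blast
  qed
  finally show ?thesis .
qed

lemma amp_length: "cl \<in> set (amp k t) \<Longrightarrow> length cl = 3*k+3"
  by (auto simp: amp_def QQ_def)

lemma NN_pow: "j < NN k \<Longrightarrow> j < 2 ^ NN k"
  using less_exp less_trans by blast

lemma cname_div: "j < NN k \<Longrightarrow> cname k j v div 2 ^ NN k = v"
  using NN_pow[of j k] by (simp add: cname_def)

lemma cname_inj: "j < NN k \<Longrightarrow> j' < NN k \<Longrightarrow> cname k j v = cname k j' v \<Longrightarrow> j = j'"
  by (simp add: cname_def)

definition maj :: "nat \<Rightarrow> (nat \<Rightarrow> bool) \<Rightarrow> nat \<Rightarrow> bool" where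
  "maj k \<alpha> v = (k+1 \<le> card {j \<in> {..<NN k}. \<alpha> (cname k j v)})"

lemma maj_pick: "\<exists>A\<in>set (Fk k). \<forall>j\<in>set A. \<alpha> (cname k j v) = maj k \<alpha> v"
proof (cases "maj k \<alpha> v")
  case True
  then obtain A where "A\<in>set (Fk k)" "set A \<subseteq> {j \<in> {..<NN k}. \<alpha> (cname k j v)}"
    using Fk_pick[of "{j \<in> {..<NN k}. \<alpha> (cname k j v)}" k] by (auto simp: maj_def)
  then show ?thesis using True by auto
next
  case False
  let ?S = "{j \<in> {..<NN k}. \<alpha> (cname k j v)}"
  let ?S' = "{j \<in> {..<NN k}. \<not> \<alpha> (cname k j v)}"
  have "card ?S + card ?S' = NN k"
  proof -
    have "card (?S \<union> ?S') = card ?S + card ?S'" by (rule card_Un_disjoint) auto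
    moreover have "?S \<union> ?S' = {..<NN k}" by auto
    ultimately show ?thesis by simp
  qed
  then have "k+1 \<le> card ?S'" using False by (simp add: maj_def NN_def)
  then obtain A where "A\<in>set (Fk k)" "set A \<subseteq> ?S'"
    using Fk_pick[of ?S' k] by auto
  then show ?thesis using False by auto
qed

lemma amp_sound:
  assumes "nae_sat_by (concat (map (amp k) T)) \<alpha>"
  shows "\<forall>t\<in>set T. NAE3 (maj k \<alpha>) t"
proof
  fix t assume tT: "t \<in> set T"
  obtain a b c where t: "t = (a,b,c)" by (cases t) auto
  show "NAE3 (maj k \<alpha>) t"
  proof (rule ccontr)
    assume "\<not> NAE3 (maj k \<alpha>) t"
    then have e: "maj k \<alpha> b = maj k \<alpha> a" "maj k \<alpha> c = maj k \<alpha> a" using t by (auto simp: NAE3_def)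
    obtain A where A: "A\<in>set (Fk k)" "\<forall>j\<in>set A. \<alpha> (cname k j a) = maj k \<alpha> a" using maj_pick by blast
    obtain B where B: "B\<in>set (Fk k)" "\<forall>j\<in>set B. \<alpha> (cname k j b) = maj k \<alpha> a" using maj_pick e by metis
    obtain C where C: "C\<in>set (Fk k)" "\<forall>j\<in>set C. \<alpha> (cname k j c) = maj k \<alpha> a" using maj_pick e by metis
    let ?cl = "map (\<lambda>j. cname k j a) A @ map (\<lambda>j. cname k j b) B @ map (\<lambda>j. cname k j c) C"
    have "?cl \<in> set (amp k (a,b,c))" using A B C amp_mem by blast
    then have "?cl \<in> set (concat (map (amp k) T))" unfolding set_concat set_map using tT t by blast
    then have "(\<exists>x \<in> set ?cl. \<alpha> x) \<and> (\<exists>x \<in> set ?cl. \<not> \<alpha> x)" using assms unfolding nae_sat_by_def by blast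
    then show False using A B C by auto
  qed
qed

lemma free_copy:
  assumes "A \<in> set (Fk k)" "finite Y" "card Y \<le> k"
  shows "\<exists>j\<in>set A. cname k j v \<notin> Y \<and> j < NN k"
proof (rule ccontr)
  assume "\<not> ?thesis"
  then have sub: "(\<lambda>j. cname k j v) ` set A \<subseteq> Y" and lt: "\<forall>j\<in>set A. j < NN k"
    using assms(1) by (auto simp: Fk_mem)
  have inj: "inj_on (\<lambda>j. cname k j v) (set A)" by (rule inj_onI) (simp add: cname_def)
  have "distinct A" using assms(1) by (auto simp: Fk_mem strict_sorted_iff)
  then have "card (set A) = k+1" using assms(1) by (simp add: Fk_mem distinct_card)
  then have "card ((\<lambda>j. cname k j v) ` set A) = k+1" using card_image[OF inj] by simp
  then have "k+1 \<le> card Y" using card_mono[OF assms(2) sub] by simp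
  then show False using assms(3) by simp
qed

lemma amp_ext:
  assumes "\<forall>t\<in>set T. NAE3 s t" "finite Y" "card Y \<le> k"
  shows "nae_sat_by (concat (map (amp k) T)) (\<lambda>n. if n \<in> Y then p n else s (n div 2 ^ NN k))"
  unfolding nae_sat_by_def
proof
  fix cl assume "cl \<in> set (concat (map (amp k) T))"
  then obtain t where tT: "t \<in> set T" and cl: "cl \<in> set (amp k t)" by auto
  obtain a b c where t: "t = (a,b,c)" by (cases t) auto
  obtain A B C where A: "A\<in>set (Fk k)" and B: "B\<in>set (Fk k)" and C: "C\<in>set (Fk k)" and
    cl': "cl = map (\<lambda>j. cname k j a) A @ map (\<lambda>j. cname k j b) B @ map (\<lambda>j. cname k j c) C"
    using cl t amp_mem by blast
  let ?a = "\<lambda>n. if n \<in> Y then p n else s (n div 2 ^ NN k)"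
  obtain ja where ja: "ja\<in>set A" "cname k ja a \<notin> Y" "ja < NN k" using free_copy[OF A assms(2,3)] by blast
  obtain jb where jb: "jb\<in>set B" "cname k jb b \<notin> Y" "jb < NN k" using free_copy[OF B assms(2,3)] by blast
  obtain jc where jc: "jc\<in>set C" "cname k jc c \<notin> Y" "jc < NN k" using free_copy[OF C assms(2,3)] by blast
  have va: "?a (cname k ja a) = s a" using ja by (simp add: cname_div)
  have vb: "?a (cname k jb b) = s b" using jb by (simp add: cname_div)
  have vc: "?a (cname k jc c) = s c" using jc by (simp add: cname_div)
  have m: "cname k ja a \<in> set cl" "cname k jb b \<in> set cl" "cname k jc c \<in> set cl"
    using cl' ja jb jc by auto
  have "NAE3 s t" using assms(1) tT by auto
  then have "\<not> (s a = s b \<and> s b = s c)" using t by (simp add: NAE3_def)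
  then show "(\<exists>x\<in>set cl. ?a x) \<and> (\<exists>x\<in>set cl. \<not> ?a x)"
    using m va vb vc by (cases "s a"; cases "s b"; cases "s c") metis+
qed

lemma amp_robust:
  assumes "\<forall>t\<in>set T. NAE3 s t" "k > 0"
  shows "robust_nae_sat k (concat (map (amp k) T))"
  unfolding robust_nae_sat_def
proof (intro allI impI)
  fix Y p assume H: "Y \<subseteq> nae_vars (concat (map (amp k) T)) \<and> card Y = k \<and> loc_compat (concat (map (amp k) T)) Y p"
  then have "finite Y" using assms(2) card_ge_0_finite by auto
  then show "\<exists>a. nae_sat_by (concat (map (amp k) T)) a \<and> (\<forall>y\<in>Y. a y = p y)"
    using amp_ext[OF assms(1), of Y k p] H by auto
qed

lemma amp_sat:
  assumes "\<forall>t\<in>set T. NAE3 s t"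
  shows "nae_sat (concat (map (amp k) T))"
  using amp_ext[OF assms, of "{}" k "\<lambda>_. False"] unfolding nae_sat_def by auto

datatype ph = Init | ClBegin | LitS bool | LitV bool bool | T2 bool bool | T3 | Skip | IncA | IncB
  | LitNext | AfterCl | Halt
datatype sub = SBit nat | SKind nat | SPay bool | SRewI | SRewC | SSep | SCl
datatype ast = P ph | A "desc \<times> desc \<times> desc" ph nat nat sub

instance desc :: countable by countable_datatype
instance ph :: countable by countable_datatype
instance sub :: countable by countable_datatype
instance ast :: countable by countable_datatype

definition bs :: "bool \<Rightarrow> sym" where "bs b = (if b then S1 else S0)"
definition isdig :: "sym option \<Rightarrow> bool" where "isdig r = (r = Some S0 \<or> r = Some S1)"

fun dkind :: "desc \<Rightarrow> nat" where
  "dkind DZ = 0" | "dkind DP = 1" | "dkind DQ = 2" | "dkind (DD b) = 3" | "dkind (DE b) = 4"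
fun icarry :: "desc \<Rightarrow> bool" where
  "icarry (DD b) = b" | "icarry (DE b) = b" | "icarry _ = True"
fun isin :: "desc \<Rightarrow> bool" where
  "isin DP = True" | "isin DQ = True" | "isin _ = False"

definition tr2 :: "bool \<Rightarrow> bool \<Rightarrow> desc \<times> desc \<times> desc" where
  "tr2 f pol = (if f then (DE True, dl pol, DZ) else (DD False, dl pol, DE True))"

type_synonym res = "ast \<times> dir \<times> nat \<times> dir \<times> sym option"

definition delta_amp :: "nat \<Rightarrow> desc \<times> desc \<times> desc \<Rightarrow> ph \<Rightarrow> nat \<Rightarrow> nat \<Rightarrow> sub \<Rightarrow> sym option \<Rightarrow> nat \<Rightarrow> res" where
  "delta_amp k tr nx ci q sb r w = (let d = tnth tr (q div (k+1)); j = CB k ! ci ! q in case sb of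
     SBit b \<Rightarrow> (A tr nx ci q (if Suc b < NN k then SBit (Suc b) else SKind 0), N, w, N, Some (bs (odd (j div 2^b))))
   | SKind b \<Rightarrow> (A tr nx ci q (if Suc b < 3 then SKind (Suc b) else SPay (icarry d)), N, w, N,
                 Some (bs (odd (dkind d div 2^b))))
   | SPay c \<Rightarrow> (if isin d then
                  (if isdig r then (A tr nx ci q (SPay (c \<and> r = Some S1)), R, w, N, Some (bs ((r = Some S1) \<noteq> c)))
                   else (A tr nx ci q SRewI, L, w, N, if c then Some S1 else None))
                else if d = DZ then (A tr nx ci q SSep, N, w, N, Some S1)
                else (if w \<noteq> 0 then (A tr nx ci q (SPay (c \<and> (w = 2 \<or> w = 4))), N, w, R, Some (bs ((w = 2 \<or> w = 4) \<noteq> c)))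
                      else (A tr nx ci q SRewC, N, w, L, if c then Some S1 else None)))
   | SRewI \<Rightarrow> (if isdig r then (A tr nx ci q SRewI, L, w, N, None) else (A tr nx ci q SSep, R, w, N, None))
   | SRewC \<Rightarrow> (if w = 3 \<or> w = 4 then (A tr nx ci q SSep, N, w, N, None) else (A tr nx ci q SRewC, N, w, L, None))
   | SSep \<Rightarrow> (if Suc q < QQ k then A tr nx ci (Suc q) (SBit 0) else A tr nx ci q SCl, N, w, N, Some SEndLit)
   | SCl \<Rightarrow> (if Suc ci < length (CB k) then A tr nx (Suc ci) 0 (SBit 0) else P nx, N, w, N, Some SEndClause))"

fun delta_a :: "nat \<Rightarrow> ast \<Rightarrow> sym option \<Rightarrow> nat \<Rightarrow> res" where
  "delta_a k (P Init) r w = (P ClBegin, R, 4, N, None)"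
| "delta_a k (P ClBegin) r w = (if r = None then (P Halt, N, w, N, None)
     else if r = Some SEndClause then (A (DZ,DZ,DZ) AfterCl 0 0 (SBit 0), N, w, N, None)
     else (P (LitS True), N, w, N, None))"
| "delta_a k (P (LitS f)) r w = (if r = Some SNeg then (P (LitV f False), R, w, N, None)
     else (P (LitV f True), N, w, N, None))"
| "delta_a k (P (LitV f pol)) r w = (A (DP,DQ,DQ) (T2 f pol) 0 0 (SBit 0), N, w, N, None)"
| "delta_a k (P (T2 f pol)) r w = (A (tr2 f pol) T3 0 0 (SBit 0), N, w, N, None)"
| "delta_a k (P T3) r w = (A (DD True, DE True, DE True) Skip 0 0 (SBit 0), N, w, N, None)"
| "delta_a k (P Skip) r w = (if isdig r then (P Skip, R, w, N, None) else (P IncA, R, w, N, None))"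
| "delta_a k (P IncA) r w = (if w = 2 then (P IncA, N, 1, R, None) else if w = 4 then (P IncA, N, 3, R, None)
     else if w = 3 then (P LitNext, N, 4, N, None) else (P IncB, N, 2, L, None))"
| "delta_a k (P IncB) r w = (if w = 3 \<or> w = 4 then (P LitNext, N, w, N, None) else (P IncB, N, w, L, None))"
| "delta_a k (P LitNext) r w = (if r = Some SEndClause then (A (DD False, DZ, DZ) AfterCl 0 0 (SBit 0), N, w, N, None)
     else (P (LitS False), N, w, N, None))"
| "delta_a k (P AfterCl) r w = (P ClBegin, R, w, N, None)"
| "delta_a k (P Halt) r w = (P Halt, N, w, N, None)"
| "delta_a k (A tr nx ci q sb) r w = delta_amp k tr nx ci q sb r w"

fun sub_ok :: "nat \<Rightarrow> sub \<Rightarrow> bool" where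
  "sub_ok k (SBit b) = (b < NN k)" | "sub_ok k (SKind b) = (b < 3)" | "sub_ok k _ = True"

fun valid :: "nat \<Rightarrow> ast \<Rightarrow> bool" where
  "valid k (P p) = True"
| "valid k (A tr nx ci q sb) = (ci < length (CB k) \<and> q < QQ k \<and> sub_ok k sb)"

lemma Fk_ne: "Fk k \<noteq> []"
proof -
  have "sorted_wrt (<) [0..<k+1]" by (rule sorted_wrt_upt)
  then have "[0..<k+1] \<in> set (Fk k)" by (auto simp: Fk_mem NN_def simp del: upt_Suc)
  then show ?thesis by auto
qed

lemma CB_ne: "0 < length (CB k)"
  using Fk_ne by (cases "Fk k") (auto simp: CB_def)

lemma CB_ne'[simp]: "CB k \<noteq> []"
  using CB_ne[of k] by auto

lemma QQ_pos[simp]: "0 < QQ k" by (simp add: QQ_def)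
lemma NN_pos[simp]: "0 < NN k" by (simp add: NN_def)

lemma valid_start[simp]: "valid k (A tr nx 0 0 (SBit 0))"
  using CB_ne by simp

lemma valid_closed: "valid k st \<Longrightarrow> valid k (fst (delta_a k st r w))"
  by (cases "(k, st, r, w)" rule: delta_a.cases) (auto simp: delta_amp_def Let_def split: sub.splits)

lemma write_closed: "w < 5 \<Longrightarrow> fst (snd (snd (delta_a k st r w))) < 5"
  by (cases "(k, st, r, w)" rule: delta_a.cases) (auto simp: delta_amp_def Let_def split: sub.splits)

lemma desc_UNIV: "(UNIV::desc set) = {DZ,DP,DQ,DD True,DD False,DE True,DE False}"
  apply (rule set_eqI) subgoal for x by (cases x) auto done

lemma ph_UNIV: "(UNIV::ph set) = {Init, ClBegin, LitS True, LitS False, LitV True True, LitV True False,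
   LitV False True, LitV False False, T2 True True, T2 True False, T2 False True, T2 False False,
   T3, Skip, IncA, IncB, LitNext, AfterCl, Halt}"
  apply (rule set_eqI) subgoal for x by (cases x) auto done

lemma finite_desc: "finite (UNIV::desc set)" by (simp add: desc_UNIV)
lemma finite_ph: "finite (UNIV::ph set)" by (simp add: ph_UNIV)

lemma finite_sub: "finite {sb. sub_ok k sb}"
proof -
  have "{sb. sub_ok k sb} \<subseteq> SBit ` {..<NN k} \<union> SKind ` {..<3} \<union> {SPay True, SPay False, SRewI, SRewC, SSep, SCl}"
  proof
    fix sb assume "sb \<in> {sb. sub_ok k sb}" then show "sb \<in> SBit ` {..<NN k} \<union> SKind ` {..<3} \<union> {SPay True, SPay False, SRewI, SRewC, SSep, SCl}"
      by (cases sb) auto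
  qed
  then show ?thesis by (rule finite_subset) auto
qed

lemma finite_valid: "finite {st. valid k st}"
proof -
  let ?S = "(UNIV::(desc \<times> desc \<times> desc) set) \<times> (UNIV::ph set) \<times> {..<length (CB k)} \<times> {..<QQ k} \<times> {sb. sub_ok k sb}"
  have fS: "finite ?S" using finite_desc finite_ph finite_sub by (simp add: finite_prod)
  have "{st. valid k st} \<subseteq> range P \<union> (\<lambda>(tr,nx,ci,q,sb). A tr nx ci q sb) ` ?S"
  proof
    fix st assume "st \<in> {st. valid k st}"
    then show "st \<in> range P \<union> (\<lambda>(tr,nx,ci,q,sb). A tr nx ci q sb) ` ?S"
    proof (cases st)
      case (A tr nx ci q sb)
      then have "st = (\<lambda>(tr,nx,ci,q,sb). A tr nx ci q sb) (tr,nx,ci,q,sb)" by simp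
      moreover have "(tr,nx,ci,q,sb) \<in> ?S" using A \<open>st \<in> {st. valid k st}\<close> by auto
      ultimately show ?thesis by blast
    qed auto
  qed
  moreover have "finite (range P)" using finite_ph by simp
  ultimately show ?thesis using fS by (meson finite_UnI finite_imageI finite_subset)
qed

definition Bk :: "nat \<Rightarrow> nat" where "Bk k = Suc (Max (to_nat ` {st. valid k st}))"

lemma to_nat_lt: "valid k st \<Longrightarrow> to_nat st < Bk k"
proof -
  assume "valid k st"
  then have "to_nat st \<le> Max (to_nat ` {st. valid k st})"
    using finite_valid by (intro Max_ge) auto
  then show ?thesis by (simp add: Bk_def)
qed

definition delta_c :: "nat \<Rightarrow> nat \<Rightarrow> sym option \<Rightarrow> nat \<Rightarrow> nat \<times> dir \<times> nat \<times> dir \<times> sym option" where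
  "delta_c k q r w = (if q \<in> to_nat ` {st. valid k st} then
     (case delta_a k (from_nat q) r w of (st', di, w', dw, ou) \<Rightarrow> (to_nat st', di, w', dw, ou))
     else (0, N, 0, N, None))"

definition M :: "nat \<Rightarrow> ltm" where
  "M k = LTM (Bk k) 5 (to_nat (P Init)) (\<lambda>q. q = to_nat (P Halt)) (delta_c k)"

lemma wf_M: "wf_ltm (M k)"
  unfolding wf_ltm_def
proof (intro conjI allI impI)
  show "0 < nwork (M k)" by (simp add: M_def)
  show "start (M k) < nstates (M k)" using to_nat_lt[of k "P Init"] by (simp add: M_def)
  fix q s w assume H: "q < nstates (M k) \<and> w < nwork (M k)"
  show "case delta (M k) q s w of (q', _, w', _, _) \<Rightarrow> q' < nstates (M k) \<and> w' < nwork (M k)"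
  proof (cases "q \<in> to_nat ` {st. valid k st}")
    case True
    then obtain st where st: "q = to_nat st" "valid k st" by auto
    obtain st' di w' dw ou where D: "delta_a k st s w = (st',di,w',dw,ou)" by (cases "delta_a k st s w") auto
    have v: "valid k st'" using valid_closed[OF st(2), of s w] D by simp
    have w: "w' < 5" using write_closed[of w k st s] H D by (simp add: M_def)
    show ?thesis using v w to_nat_lt[OF v] st D True
      by (simp add: M_def delta_c_def)
  next
    case False
    then show ?thesis using to_nat_lt[of k "P Init"] by (simp add: M_def delta_c_def)
  qed
qed

definition cf :: "ast \<Rightarrow> nat \<Rightarrow> (nat \<Rightarrow> nat) \<Rightarrow> nat \<Rightarrow> sym list \<Rightarrow> config" where
  "cf st ih wt wh out = (to_nat st, ih, wt, wh, out)"

definition outs :: "sym option \<Rightarrow> sym list" where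
  "outs ou = (case ou of None \<Rightarrow> [] | Some s \<Rightarrow> [s])"

lemma step_cf:
  assumes "valid k st" "st \<noteq> P Halt" "delta_a k st (read_in x ih) (wt wh) = (st', di, w', dw, ou)"
  shows "step (M k) x (cf st ih wt wh out) = cf st' (min (move di ih) (Suc (length x))) (wt(wh := w')) (move dw wh) (out @ outs ou)"
proof -
  have "to_nat st \<noteq> to_nat (P Halt)" using assms(2) by simp
  moreover have "to_nat st \<in> to_nat ` {st. valid k st}" using assms(1) by auto
  ultimately show ?thesis using assms(3)
    by (simp add: step_def cf_def M_def delta_c_def outs_def)
qed

lemma halt_cf: "step (M k) x (cf (P Halt) ih wt wh out) = cf (P Halt) ih wt wh out"
  by (simp add: step_def cf_def M_def)

definition whd :: "config \<Rightarrow> nat" where "whd c = (case c of (_,_,_,wh,_) \<Rightarrow> wh)"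

definition reach :: "nat \<Rightarrow> sym list \<Rightarrow> nat \<Rightarrow> config \<Rightarrow> config \<Rightarrow> bool" where
  "reach k x s c c' \<longleftrightarrow> (\<exists>t. (step (M k) x ^^ t) c = c' \<and> (\<forall>t' \<le> t. whd ((step (M k) x ^^ t') c) < s))"

lemma reach_refl: "whd c < s \<Longrightarrow> reach k x s c c"
  unfolding reach_def by (rule exI[of _ 0]) simp

lemma reach_trans: "reach k x s c1 c2 \<Longrightarrow> reach k x s c2 c3 \<Longrightarrow> reach k x s c1 c3"
  unfolding reach_def
proof (elim exE conjE)
  fix t1 t2
  assume 1: "(step (M k) x ^^ t1) c1 = c2" "\<forall>t'\<le>t1. whd ((step (M k) x ^^ t') c1) < s"
     and 2: "(step (M k) x ^^ t2) c2 = c3" "\<forall>t'\<le>t2. whd ((step (M k) x ^^ t') c2) < s"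
  have "(step (M k) x ^^ (t2 + t1)) c1 = c3" using 1 2 by (simp add: funpow_add)
  moreover have "\<forall>t'\<le>t2 + t1. whd ((step (M k) x ^^ t') c1) < s"
  proof (intro allI impI)
    fix t' assume "t' \<le> t2 + t1"
    show "whd ((step (M k) x ^^ t') c1) < s"
    proof (cases "t' \<le> t1")
      case True then show ?thesis using 1 by simp
    next
      case False
      then have "(step (M k) x ^^ t') c1 = (step (M k) x ^^ (t' - t1)) c2"
      proof -
        have "t' = (t' - t1) + t1" using False by simp
        then have "(step (M k) x ^^ t') c1 = (step (M k) x ^^ (t' - t1)) ((step (M k) x ^^ t1) c1)"
          by (metis funpow_add o_apply)
        then show ?thesis using 1 by simp
      qed
      then show ?thesis using 2 False \<open>t' \<le> t2 + t1\<close> by simp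
    qed
  qed
  ultimately show "\<exists>t. (step (M k) x ^^ t) c1 = c3 \<and> (\<forall>t'\<le>t. whd ((step (M k) x ^^ t') c1) < s)" by blast
qed

lemma reach_step: "whd c < s \<Longrightarrow> reach k x s (step (M k) x c) c' \<Longrightarrow> reach k x s c c'"
  unfolding reach_def
proof (elim exE conjE)
  fix t assume a: "whd c < s" "(step (M k) x ^^ t) (step (M k) x c) = c'"
    "\<forall>t'\<le>t. whd ((step (M k) x ^^ t') (step (M k) x c)) < s"
  have "(step (M k) x ^^ Suc t) c = c'" using a(2) by (simp only: funpow_Suc_right o_apply)
  moreover have "\<forall>t'\<le>Suc t. whd ((step (M k) x ^^ t') c) < s"
  proof (intro allI impI)
    fix t' assume "t' \<le> Suc t"
    then show "whd ((step (M k) x ^^ t') c) < s"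
    proof (cases t')
      case 0 then show ?thesis using a(1) by simp
    next
      case (Suc u)
      then have "(step (M k) x ^^ t') c = (step (M k) x ^^ u) (step (M k) x c)"
        by (simp only: funpow_Suc_right o_apply)
      then show ?thesis using a(3) Suc \<open>t' \<le> Suc t\<close> by simp
    qed
  qed
  ultimately show "\<exists>t. (step (M k) x ^^ t) c = c' \<and> (\<forall>t'\<le>t. whd ((step (M k) x ^^ t') c) < s)" by blast
qed

lemma rs:
  assumes "valid k st" "st \<noteq> P Halt" "wh < s" "delta_a k st (read_in x ih) (wt wh) = (st', di, w', dw, ou)"
    "reach k x s (cf st' (min (move di ih) (Suc (length x))) (wt(wh := w')) (move dw wh) (out @ outs ou)) c'"
  shows "reach k x s (cf st ih wt wh out) c'"
proof -
  have eq: "step (M k) x (cf st ih wt wh out) = cf st' (min (move di ih) (Suc (length x))) (wt(wh := w')) (move dw wh) (out @ outs ou)"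
    by (rule step_cf[of k st x ih wt wh st' di w' dw ou out, OF assms(1,2,4)])
  have w: "whd (cf st ih wt wh out) < s" using assms(3) by (simp add: whd_def cf_def)
  have "reach k x s (step (M k) x (cf st ih wt wh out)) c'" unfolding eq by (rule assms(5))
  then show ?thesis by (rule reach_step[OF w])
qed

lemma reach_cf_refl: "wh < s \<Longrightarrow> reach k x s (cf st ih wt wh out) (cf st ih wt wh out)"
  by (rule reach_refl) (simp add: whd_def cf_def)

lemma move_simps[simp]: "move N i = i" "move R i = Suc i" "move L i = i - 1"
  by simp_all

lemma outs_simps[simp]: "outs None = []" "outs (Some s) = [s]"
  by (simp_all add: outs_def)

lemma t_bit:
  assumes "ci < length (CB k)" "q < QQ k" "b < NN k" "wh < s" "ih \<le> Suc (length x)"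
    "reach k x s (cf (A tr nx ci q (if Suc b < NN k then SBit (Suc b) else SKind 0)) ih wt wh
       (out @ [bs (odd ((CB k ! ci ! q) div 2^b))])) c'"
  shows "reach k x s (cf (A tr nx ci q (SBit b)) ih wt wh out) c'"
  apply (rule rs[where st'="A tr nx ci q (if Suc b < NN k then SBit (Suc b) else SKind 0)" and di=N
     and w'="wt wh" and dw=N and ou="Some (bs (odd ((CB k ! ci ! q) div 2^b)))"])
  using assms by (simp_all add: delta_amp_def Let_def min_absorb1)

lemma t_kind:
  assumes "ci < length (CB k)" "q < QQ k" "b < 3" "wh < s" "ih \<le> Suc (length x)"
    "reach k x s (cf (A tr nx ci q (if Suc b < 3 then SKind (Suc b) else SPay (icarry (tnth tr (q div (k+1)))))) ih wt wh
       (out @ [bs (odd (dkind (tnth tr (q div (k+1))) div 2^b))])) c'"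
  shows "reach k x s (cf (A tr nx ci q (SKind b)) ih wt wh out) c'"
  apply (rule rs[where st'="A tr nx ci q (if Suc b < 3 then SKind (Suc b) else SPay (icarry (tnth tr (q div (k+1)))))" and di=N
     and w'="wt wh" and dw=N and ou="Some (bs (odd (dkind (tnth tr (q div (k+1))) div 2^b)))"])
  using assms by (simp_all add: delta_amp_def Let_def min_absorb1)

lemma t_payz:
  assumes "ci < length (CB k)" "q < QQ k" "wh < s" "ih \<le> Suc (length x)" "tnth tr (q div (k+1)) = DZ"
    "reach k x s (cf (A tr nx ci q SSep) ih wt wh (out @ [S1])) c'"
  shows "reach k x s (cf (A tr nx ci q (SPay c)) ih wt wh out) c'"
  apply (rule rs[where st'="A tr nx ci q SSep" and di=N and w'="wt wh" and dw=N and ou="Some S1"])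
  using assms by (simp_all add: delta_amp_def Let_def min_absorb1)

lemma t_payin_dig:
  assumes "ci < length (CB k)" "q < QQ k" "wh < s" "ih \<le> length x" "isin (tnth tr (q div (k+1)))"
    "read_in x ih = Some dg" "dg = S0 \<or> dg = S1"
    "reach k x s (cf (A tr nx ci q (SPay (c \<and> dg = S1))) (Suc ih) wt wh (out @ [bs ((dg = S1) \<noteq> c)])) c'"
  shows "reach k x s (cf (A tr nx ci q (SPay c)) ih wt wh out) c'"
  apply (rule rs[where st'="A tr nx ci q (SPay (c \<and> dg = S1))" and di=R and w'="wt wh" and dw=N
     and ou="Some (bs ((dg = S1) \<noteq> c))"])
  using assms by (auto simp: delta_amp_def Let_def isdig_def)

lemma t_payin_end:
  assumes "ci < length (CB k)" "q < QQ k" "wh < s" "ih \<le> Suc (length x)" "isin (tnth tr (q div (k+1)))"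
    "\<not> isdig (read_in x ih)"
    "reach k x s (cf (A tr nx ci q SRewI) (ih - 1) wt wh (out @ (if c then [S1] else []))) c'"
  shows "reach k x s (cf (A tr nx ci q (SPay c)) ih wt wh out) c'"
  apply (rule rs[where st'="A tr nx ci q SRewI" and di=L and w'="wt wh" and dw=N
     and ou="if c then Some S1 else None"])
  using assms by (auto simp: delta_amp_def Let_def)

lemma t_payc_nz:
  assumes "ci < length (CB k)" "q < QQ k" "wh < s" "ih \<le> Suc (length x)" "\<not> isin (tnth tr (q div (k+1)))"
    "tnth tr (q div (k+1)) \<noteq> DZ" "wt wh \<noteq> 0"
    "reach k x s (cf (A tr nx ci q (SPay (c \<and> (wt wh = 2 \<or> wt wh = 4)))) ih wt (Suc wh)
       (out @ [bs ((wt wh = 2 \<or> wt wh = 4) \<noteq> c)])) c'"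
  shows "reach k x s (cf (A tr nx ci q (SPay c)) ih wt wh out) c'"
  apply (rule rs[where st'="A tr nx ci q (SPay (c \<and> (wt wh = 2 \<or> wt wh = 4)))" and di=N and w'="wt wh" and dw=R
     and ou="Some (bs ((wt wh = 2 \<or> wt wh = 4) \<noteq> c))"])
  using assms by (simp_all add: delta_amp_def Let_def min_absorb1)

lemma t_payc_z:
  assumes "ci < length (CB k)" "q < QQ k" "wh < s" "ih \<le> Suc (length x)" "\<not> isin (tnth tr (q div (k+1)))"
    "tnth tr (q div (k+1)) \<noteq> DZ" "wt wh = 0"
    "reach k x s (cf (A tr nx ci q SRewC) ih wt (wh - 1) (out @ (if c then [S1] else []))) c'"
  shows "reach k x s (cf (A tr nx ci q (SPay c)) ih wt wh out) c'"
  apply (rule rs[where st'="A tr nx ci q SRewC" and di=N and w'="wt wh" and dw=L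
     and ou="if c then Some S1 else None"])
  using assms by (auto simp: delta_amp_def Let_def min_absorb1 fun_upd_idem)

lemma t_rewi_dig:
  assumes "ci < length (CB k)" "q < QQ k" "wh < s" "ih \<le> Suc (length x)" "isdig (read_in x ih)"
    "reach k x s (cf (A tr nx ci q SRewI) (ih - 1) wt wh out) c'"
  shows "reach k x s (cf (A tr nx ci q SRewI) ih wt wh out) c'"
  apply (rule rs[where st'="A tr nx ci q SRewI" and di=L and w'="wt wh" and dw=N and ou=None])
  using assms by (auto simp: delta_amp_def Let_def)

lemma t_rewi_end:
  assumes "ci < length (CB k)" "q < QQ k" "wh < s" "ih \<le> length x" "\<not> isdig (read_in x ih)"
    "reach k x s (cf (A tr nx ci q SSep) (Suc ih) wt wh out) c'"
  shows "reach k x s (cf (A tr nx ci q SRewI) ih wt wh out) c'"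
  apply (rule rs[where st'="A tr nx ci q SSep" and di=R and w'="wt wh" and dw=N and ou=None])
  using assms by (auto simp: delta_amp_def Let_def)

lemma t_rewc_0:
  assumes "ci < length (CB k)" "q < QQ k" "wh < s" "ih \<le> Suc (length x)" "wt wh = 3 \<or> wt wh = 4"
    "reach k x s (cf (A tr nx ci q SSep) ih wt wh out) c'"
  shows "reach k x s (cf (A tr nx ci q SRewC) ih wt wh out) c'"
  apply (rule rs[where st'="A tr nx ci q SSep" and di=N and w'="wt wh" and dw=N and ou=None])
  using assms by (auto simp: delta_amp_def Let_def min_absorb1)

lemma t_rewc:
  assumes "ci < length (CB k)" "q < QQ k" "wh < s" "ih \<le> Suc (length x)" "wt wh \<noteq> 3" "wt wh \<noteq> 4"
    "reach k x s (cf (A tr nx ci q SRewC) ih wt (wh - 1) out) c'"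
  shows "reach k x s (cf (A tr nx ci q SRewC) ih wt wh out) c'"
  apply (rule rs[where st'="A tr nx ci q SRewC" and di=N and w'="wt wh" and dw=L and ou=None])
  using assms by (auto simp: delta_amp_def Let_def min_absorb1)

lemma t_sep:
  assumes "ci < length (CB k)" "q < QQ k" "wh < s" "ih \<le> Suc (length x)"
    "reach k x s (cf (if Suc q < QQ k then A tr nx ci (Suc q) (SBit 0) else A tr nx ci q SCl) ih wt wh (out @ [SEndLit])) c'"
  shows "reach k x s (cf (A tr nx ci q SSep) ih wt wh out) c'"
  apply (rule rs[where st'="if Suc q < QQ k then A tr nx ci (Suc q) (SBit 0) else A tr nx ci q SCl" and di=N
     and w'="wt wh" and dw=N and ou="Some SEndLit"])
  using assms by (simp_all add: delta_amp_def Let_def min_absorb1)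

lemma t_cl:
  assumes "ci < length (CB k)" "q < QQ k" "wh < s" "ih \<le> Suc (length x)"
    "reach k x s (cf (if Suc ci < length (CB k) then A tr nx (Suc ci) 0 (SBit 0) else P nx) ih wt wh (out @ [SEndClause])) c'"
  shows "reach k x s (cf (A tr nx ci q SCl) ih wt wh out) c'"
  apply (rule rs[where st'="if Suc ci < length (CB k) then A tr nx (Suc ci) 0 (SBit 0) else P nx" and di=N
     and w'="wt wh" and dw=N and ou="Some SEndClause"])
  using assms by (simp_all add: delta_amp_def Let_def min_absorb1)

lemma t_init:
  assumes "wh < s" "ih \<le> length x"
    "reach k x s (cf (P ClBegin) (Suc ih) (wt(wh := 4)) wh out) c'"
  shows "reach k x s (cf (P Init) ih wt wh out) c'"
  apply (rule rs[where st'="P ClBegin" and di=R and w'=4 and dw=N and ou=None])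
  using assms by auto

lemma t_clb_none:
  assumes "wh < s" "ih \<le> Suc (length x)" "read_in x ih = None"
    "reach k x s (cf (P Halt) ih wt wh out) c'"
  shows "reach k x s (cf (P ClBegin) ih wt wh out) c'"
  apply (rule rs[where st'="P Halt" and di=N and w'="wt wh" and dw=N and ou=None])
  using assms by (auto simp: min_absorb1)

lemma t_clb_end:
  assumes "wh < s" "ih \<le> Suc (length x)" "read_in x ih = Some SEndClause"
    "reach k x s (cf (A (DZ,DZ,DZ) AfterCl 0 0 (SBit 0)) ih wt wh out) c'"
  shows "reach k x s (cf (P ClBegin) ih wt wh out) c'"
  apply (rule rs[where st'="A (DZ,DZ,DZ) AfterCl 0 0 (SBit 0)" and di=N and w'="wt wh" and dw=N and ou=None])
  using assms by (auto simp: min_absorb1)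

lemma t_clb_lit:
  assumes "wh < s" "ih \<le> Suc (length x)" "read_in x ih = Some sy" "sy \<noteq> SEndClause"
    "reach k x s (cf (P (LitS True)) ih wt wh out) c'"
  shows "reach k x s (cf (P ClBegin) ih wt wh out) c'"
  apply (rule rs[where st'="P (LitS True)" and di=N and w'="wt wh" and dw=N and ou=None])
  using assms by (auto simp: min_absorb1)

lemma t_lits_neg:
  assumes "wh < s" "ih \<le> length x" "read_in x ih = Some SNeg"
    "reach k x s (cf (P (LitV f False)) (Suc ih) wt wh out) c'"
  shows "reach k x s (cf (P (LitS f)) ih wt wh out) c'"
  apply (rule rs[where st'="P (LitV f False)" and di=R and w'="wt wh" and dw=N and ou=None])
  using assms by auto

lemma t_lits_pos:
  assumes "wh < s" "ih \<le> Suc (length x)" "read_in x ih \<noteq> Some SNeg"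
    "reach k x s (cf (P (LitV f True)) ih wt wh out) c'"
  shows "reach k x s (cf (P (LitS f)) ih wt wh out) c'"
  apply (rule rs[where st'="P (LitV f True)" and di=N and w'="wt wh" and dw=N and ou=None])
  using assms by (auto simp: min_absorb1)

lemma t_litv:
  assumes "wh < s" "ih \<le> Suc (length x)"
    "reach k x s (cf (A (DP,DQ,DQ) (T2 f pol) 0 0 (SBit 0)) ih wt wh out) c'"
  shows "reach k x s (cf (P (LitV f pol)) ih wt wh out) c'"
  apply (rule rs[where st'="A (DP,DQ,DQ) (T2 f pol) 0 0 (SBit 0)" and di=N and w'="wt wh" and dw=N and ou=None])
  using assms by (auto simp: min_absorb1)

lemma t_t2:
  assumes "wh < s" "ih \<le> Suc (length x)"
    "reach k x s (cf (A (tr2 f pol) T3 0 0 (SBit 0)) ih wt wh out) c'"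
  shows "reach k x s (cf (P (T2 f pol)) ih wt wh out) c'"
  apply (rule rs[where st'="A (tr2 f pol) T3 0 0 (SBit 0)" and di=N and w'="wt wh" and dw=N and ou=None])
  using assms by (auto simp: min_absorb1)

lemma t_t3:
  assumes "wh < s" "ih \<le> Suc (length x)"
    "reach k x s (cf (A (DD True, DE True, DE True) Skip 0 0 (SBit 0)) ih wt wh out) c'"
  shows "reach k x s (cf (P T3) ih wt wh out) c'"
  apply (rule rs[where st'="A (DD True, DE True, DE True) Skip 0 0 (SBit 0)" and di=N and w'="wt wh" and dw=N and ou=None])
  using assms by (auto simp: min_absorb1)

lemma t_skip_dig:
  assumes "wh < s" "ih \<le> length x" "isdig (read_in x ih)"
    "reach k x s (cf (P Skip) (Suc ih) wt wh out) c'"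
  shows "reach k x s (cf (P Skip) ih wt wh out) c'"
  apply (rule rs[where st'="P Skip" and di=R and w'="wt wh" and dw=N and ou=None])
  using assms by auto

lemma t_skip_end:
  assumes "wh < s" "ih \<le> length x" "\<not> isdig (read_in x ih)"
    "reach k x s (cf (P IncA) (Suc ih) wt wh out) c'"
  shows "reach k x s (cf (P Skip) ih wt wh out) c'"
  apply (rule rs[where st'="P IncA" and di=R and w'="wt wh" and dw=N and ou=None])
  using assms by auto

lemma t_inca_2:
  assumes "wh < s" "ih \<le> Suc (length x)" "wt wh = 2"
    "reach k x s (cf (P IncA) ih (wt(wh := 1)) (Suc wh) out) c'"
  shows "reach k x s (cf (P IncA) ih wt wh out) c'"
  apply (rule rs[where st'="P IncA" and di=N and w'=1 and dw=R and ou=None])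
  using assms by (auto simp: min_absorb1)

lemma t_inca_4:
  assumes "wh < s" "ih \<le> Suc (length x)" "wt wh = 4"
    "reach k x s (cf (P IncA) ih (wt(wh := 3)) (Suc wh) out) c'"
  shows "reach k x s (cf (P IncA) ih wt wh out) c'"
  apply (rule rs[where st'="P IncA" and di=N and w'=3 and dw=R and ou=None])
  using assms by (auto simp: min_absorb1)

lemma t_inca_3:
  assumes "wh < s" "ih \<le> Suc (length x)" "wt wh = 3"
    "reach k x s (cf (P LitNext) ih (wt(wh := 4)) wh out) c'"
  shows "reach k x s (cf (P IncA) ih wt wh out) c'"
  apply (rule rs[where st'="P LitNext" and di=N and w'=4 and dw=N and ou=None])
  using assms by (auto simp: min_absorb1)

lemma t_inca_e:
  assumes "wh < s" "ih \<le> Suc (length x)" "wt wh \<noteq> 2" "wt wh \<noteq> 3" "wt wh \<noteq> 4"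
    "reach k x s (cf (P IncB) ih (wt(wh := 2)) (wh - 1) out) c'"
  shows "reach k x s (cf (P IncA) ih wt wh out) c'"
  apply (rule rs[where st'="P IncB" and di=N and w'=2 and dw=L and ou=None])
  using assms by (auto simp: min_absorb1)

lemma t_incb_0:
  assumes "wh < s" "ih \<le> Suc (length x)" "wt wh = 3 \<or> wt wh = 4"
    "reach k x s (cf (P LitNext) ih wt wh out) c'"
  shows "reach k x s (cf (P IncB) ih wt wh out) c'"
  apply (rule rs[where st'="P LitNext" and di=N and w'="wt wh" and dw=N and ou=None])
  using assms by (auto simp: min_absorb1)

lemma t_incb:
  assumes "wh < s" "ih \<le> Suc (length x)" "wt wh \<noteq> 3" "wt wh \<noteq> 4"
    "reach k x s (cf (P IncB) ih wt (wh - 1) out) c'"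
  shows "reach k x s (cf (P IncB) ih wt wh out) c'"
  apply (rule rs[where st'="P IncB" and di=N and w'="wt wh" and dw=L and ou=None])
  using assms by (auto simp: min_absorb1)

lemma t_ln_end:
  assumes "wh < s" "ih \<le> Suc (length x)" "read_in x ih = Some SEndClause"
    "reach k x s (cf (A (DD False, DZ, DZ) AfterCl 0 0 (SBit 0)) ih wt wh out) c'"
  shows "reach k x s (cf (P LitNext) ih wt wh out) c'"
  apply (rule rs[where st'="A (DD False, DZ, DZ) AfterCl 0 0 (SBit 0)" and di=N and w'="wt wh" and dw=N and ou=None])
  using assms by (auto simp: min_absorb1)

lemma t_ln_lit:
  assumes "wh < s" "ih \<le> Suc (length x)" "read_in x ih \<noteq> Some SEndClause"
    "reach k x s (cf (P (LitS False)) ih wt wh out) c'"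
  shows "reach k x s (cf (P LitNext) ih wt wh out) c'"
  apply (rule rs[where st'="P (LitS False)" and di=N and w'="wt wh" and dw=N and ou=None])
  using assms by (auto simp: min_absorb1)

lemma t_after:
  assumes "wh < s" "ih \<le> length x"
    "reach k x s (cf (P ClBegin) (Suc ih) wt wh out) c'"
  shows "reach k x s (cf (P AfterCl) ih wt wh out) c'"
  apply (rule rs[where st'="P ClBegin" and di=R and w'="wt wh" and dw=N and ou=None])
  using assms by auto

declare bin.simps[simp del]

lemma bin_lt2: "n < 2 \<Longrightarrow> bin n = [if n = 0 then S0 else S1]"
  by (subst bin.simps[of n]) simp
lemma bin_ge2: "2 \<le> n \<Longrightarrow> bin n = (if n mod 2 = 0 then S0 else S1) # bin (n div 2)"
  by (subst bin.simps[of n]) simp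

lemma bin_ne[simp]: "bin n \<noteq> []"
  by (cases "n < 2") (auto simp: bin_lt2 bin_ge2)

lemma bin_digits: "set (bin n) \<subseteq> {S0, S1}"
proof (induction n rule: bin.induct)
  case (1 n) then show ?case by (cases "n < 2") (auto simp: bin_lt2 bin_ge2)
qed

fun incr_out :: "bool \<Rightarrow> sym list \<Rightarrow> sym list" where
  "incr_out c [] = (if c then [S1] else [])"
| "incr_out c (d#ds) = bs ((d = S1) \<noteq> c) # incr_out (c \<and> d = S1) ds"

lemma incr_False: "set ds \<subseteq> {S0, S1} \<Longrightarrow> incr_out False ds = ds"
  by (induction ds) (auto simp: bs_def)

lemma incr_bin: "incr_out True (bin n) = bin (Suc n)"
proof (induction n rule: bin.induct)
  case (1 n)
  show ?case
  proof (cases "n < 2")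
    case True
    then have "n = 0 \<or> n = 1" by auto
    then show ?thesis by (auto simp: bin_lt2 bin_ge2 bs_def)
  next
    case False
    then have IH: "incr_out True (bin (n div 2)) = bin (Suc (n div 2))" using 1 by simp
    show ?thesis
    proof (cases "n mod 2 = 0")
      case True
      then have "Suc n div 2 = n div 2" "Suc n mod 2 = 1" by presburger+
      then show ?thesis using False True
        by (simp add: bin_ge2[of n] bin_ge2[of "Suc n"] bs_def incr_False bin_digits)
    next
      case F2: False
      then have "Suc n div 2 = Suc (n div 2)" "Suc n mod 2 = 0" by presburger+
      then show ?thesis using False F2 IH
        by (simp add: bin_ge2[of n] bin_ge2[of "Suc n"] bs_def)
    qed
  qed
qed

fun nbits :: "nat \<Rightarrow> nat \<Rightarrow> sym list" where
  "nbits 0 j = []"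
| "nbits (Suc n) j = bs (odd j) # nbits n (j div 2)"

lemma nbits_map: "nbits n j = map (\<lambda>b. bs (odd (j div 2^b))) [0..<n]"
proof (induction n arbitrary: j)
  case 0 then show ?case by simp
next
  case (Suc n)
  have "map (\<lambda>b. bs (odd (j div 2^b))) [0..<Suc n] = bs (odd j) # map (\<lambda>b. bs (odd (j div 2^Suc b))) [0..<n]"
    by (simp add: map_upt_Suc del: upt_Suc)
  also have "\<dots> = bs (odd j) # map (\<lambda>b. bs (odd ((j div 2) div 2^b))) [0..<n]"
    by (simp add: div_mult2_eq)
  finally show ?case using Suc by simp
qed

lemma bin_split: "j < 2^n \<Longrightarrow> 0 < m \<Longrightarrow> bin (j + 2^n * m) = nbits n j @ bin m"
proof (induction n arbitrary: j)
  case 0 then show ?case by simp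
next
  case (Suc n)
  have "2^Suc n * 1 \<le> 2^Suc n * m" using Suc.prems(2) by (intro mult_le_mono2) simp
  moreover have "(2::nat) \<le> 2^Suc n" by simp
  ultimately have ge: "2 \<le> j + 2^Suc n * m" by linarith
  have d: "(j + 2^Suc n * m) div 2 = j div 2 + 2^n * m" by simp
  have md: "(j + 2^Suc n * m) mod 2 = j mod 2" by (simp add: mult.assoc)
  have "j div 2 < 2^n" using Suc.prems(1) by (simp add: less_mult_imp_div_less)
  then have IH: "bin (j div 2 + 2^n * m) = nbits n (j div 2) @ bin m" using Suc.IH Suc.prems(2) by blast
  have b: "bin (j + 2^Suc n * m) = (if (j + 2^Suc n * m) mod 2 = 0 then S0 else S1) # bin ((j + 2^Suc n * m) div 2)"
    by (rule bin_ge2[OF ge])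
  show ?case unfolding b d md IH by (simp add: bs_def odd_iff_mod_2_eq_one)
qed

lemma len_bin: "length (bin n) = floor_log n + 1"
proof (induction n rule: bin.induct)
  case (1 n)
  show ?case
  proof (cases "n < 2")
    case True
    then have "n = 0 \<or> n = 1" by auto
    then have "floor_log n = 0" by auto
    then show ?thesis using True by (simp add: bin_lt2)
  next
    case False
    then have a: "bin n = (if n mod 2 = 0 then S0 else S1) # bin (n div 2)" by (intro bin_ge2) simp
    have b: "floor_log n = Suc (floor_log (n div 2))" using False by (intro floor_log_rec) simp
    have "length (bin (n div 2)) = floor_log (n div 2) + 1" using 1 False by blast
    then show ?thesis unfolding a b by simp
  qed
qed

definition pay_str :: "nat \<Rightarrow> nat \<Rightarrow> desc \<Rightarrow> sym list" where
  "pay_str v c d = (case d of DZ \<Rightarrow> [S1] | DP \<Rightarrow> incr_out True (bin v) | DQ \<Rightarrow> incr_out True (bin v)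
     | DD b \<Rightarrow> incr_out b (bin c) | DE b \<Rightarrow> incr_out b (bin c))"

lemma bin_name:
  assumes "j < NN k" "0 < c"
  shows "bin (cname k j (dval v c d)) = nbits (NN k) j @ nbits 3 (dkind d) @ pay_str v c d"
proof -
  have j: "j < 2 ^ NN k" using assms(1) NN_pow by blast
  have pay: "dval v c d = dkind d + 2^3 * (case d of DZ \<Rightarrow> 1 | DP \<Rightarrow> v+1 | DQ \<Rightarrow> v+1 | DD b \<Rightarrow> c + (if b then 1 else 0)
      | DE b \<Rightarrow> c + (if b then 1 else 0))"
    by (cases d) (simp_all add: vcode_def)
  have pp: "0 < (case d of DZ \<Rightarrow> 1 | DP \<Rightarrow> v+1 | DQ \<Rightarrow> v+1 | DD b \<Rightarrow> c + (if b then 1 else 0)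
      | DE b \<Rightarrow> c + (if b then 1 else 0))" using assms(2) by (cases d) auto
  have kd: "dkind d < 2^3" by (cases d) auto
  have ps: "bin (case d of DZ \<Rightarrow> 1 | DP \<Rightarrow> v+1 | DQ \<Rightarrow> v+1 | DD b \<Rightarrow> c + (if b then 1 else 0)
      | DE b \<Rightarrow> c + (if b then 1 else 0)) = pay_str v c d"
  proof (cases d)
    case DZ then show ?thesis by (simp add: pay_str_def bin_lt2)
  next
    case DP then show ?thesis by (simp add: pay_str_def incr_bin)
  next
    case DQ then show ?thesis by (simp add: pay_str_def incr_bin)
  next
    case (DD b) then show ?thesis by (cases b) (simp_all add: pay_str_def incr_bin incr_False[OF bin_digits])
  next
    case (DE b) then show ?thesis by (cases b) (simp_all add: pay_str_def incr_bin incr_False[OF bin_digits])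
  qed
  have pos: "0 < dval v c d" using pay pp by simp
  have e1: "bin (j + 2 ^ NN k * dval v c d) = nbits (NN k) j @ bin (dval v c d)" by (rule bin_split[OF j pos])
  have e2: "bin (dval v c d) = nbits 3 (dkind d) @ pay_str v c d"
    unfolding pay bin_split[OF kd pp] ps ..
  show ?thesis unfolding cname_def e1 e2 ..
qed

lemma CB_elem:
  assumes "ci < length (CB k)" "q < QQ k"
  shows "CB k ! ci ! q < NN k" "length (CB k ! ci) = QQ k"
proof -
  have "CB k ! ci \<in> set (CB k)" using assms(1) by simp
  then obtain A B C where ABC: "A\<in>set (Fk k)" "B\<in>set (Fk k)" "C\<in>set (Fk k)" "CB k ! ci = A @ B @ C"
    unfolding CB_mem by blast
  have sub: "set (A @ B @ C) \<subseteq> {..<NN k}" using ABC(1-3) unfolding Fk_mem by auto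
  have len: "length (A @ B @ C) = QQ k" using ABC(1-3) unfolding Fk_mem QQ_def by simp
  show "length (CB k ! ci) = QQ k" using len ABC(4) by simp
  have "(A @ B @ C) ! q \<in> set (A @ B @ C)" using assms(2) len by (intro nth_mem) simp
  then show "CB k ! ci ! q < NN k" using sub ABC(4) by auto
qed

definition tape_of :: "sym list \<Rightarrow> nat \<Rightarrow> nat" where
  "tape_of l i = (if i < length l then (if i = 0 then (if l!0 = S1 then 4 else 3) else (if l!i = S1 then 2 else 1)) else 0)"

lemma read_in_app: "i < length y \<Longrightarrow> read_in (pre @ y @ z) (length pre + 1 + i) = Some (y ! i)"
  by (simp add: read_in_def nth_append)

definition inp :: "sym list \<Rightarrow> nat \<Rightarrow> nat \<Rightarrow> bool" where
  "inp x ih v \<longleftrightarrow> (\<exists>pre rest. x = pre @ bin v @ SEndLit # rest \<and> ih = length pre + 1 \<and> (pre = [] \<or> last pre \<notin> {S0, S1}))"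

lemma bits_loop:
  assumes a: "ci < length (CB k)" "q < QQ k" "wh < s" "ih \<le> Suc (length x)"
  shows "NN k - b = m \<Longrightarrow> b < NN k \<Longrightarrow> reach k x s (cf (A tr nx ci q (SBit b)) ih wt wh out)
     (cf (A tr nx ci q (SKind 0)) ih wt wh (out @ map (\<lambda>b. bs (odd ((CB k ! ci ! q) div 2^b))) [b..<NN k]))"
proof (induction m arbitrary: b out)
  case 0 then show ?case by simp
next
  case (Suc m)
  have u: "[b..<NN k] = b # [Suc b..<NN k]" using Suc.prems by (simp add: upt_conv_Cons)
  show ?case
  proof (cases "Suc b < NN k")
    case True
    have "reach k x s (cf (A tr nx ci q (SBit (Suc b))) ih wt wh (out @ [bs (odd ((CB k ! ci ! q) div 2^b))]))
      (cf (A tr nx ci q (SKind 0)) ih wt wh ((out @ [bs (odd ((CB k ! ci ! q) div 2^b))]) @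
          map (\<lambda>b. bs (odd ((CB k ! ci ! q) div 2^b))) [Suc b..<NN k]))"
      using Suc.IH[of "Suc b" "out @ [bs (odd ((CB k ! ci ! q) div 2^b))]"] Suc.prems True by simp
    then show ?thesis using True u by (intro t_bit[OF a(1,2) Suc.prems(2) a(3,4)]) simp
  next
    case False
    then have "[Suc b..<NN k] = []" by simp
    then show ?thesis using False u by (intro t_bit[OF a(1,2) Suc.prems(2) a(3,4)]) (simp add: reach_cf_refl a(3))
  qed
qed

lemma kind_seq:
  assumes a: "ci < length (CB k)" "q < QQ k" "wh < s" "ih \<le> Suc (length x)"
  shows "reach k x s (cf (A tr nx ci q (SKind 0)) ih wt wh out)
     (cf (A tr nx ci q (SPay (icarry (tnth tr (q div (k+1)))))) ih wt wh (out @ nbits 3 (dkind (tnth tr (q div (k+1))))))"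
proof -
  let ?kd = "dkind (tnth tr (q div (k+1)))"
  have n3: "nbits 3 ?kd = [bs (odd (?kd div 2^0)), bs (odd (?kd div 2^1)), bs (odd (?kd div 2^2))]"
    by (simp add: nbits_map upt_rec)
  show ?thesis unfolding n3
    apply (rule t_kind[OF a(1,2) _ a(3,4)], simp)
    apply (simp, rule t_kind[OF a(1,2) _ a(3,4)], simp)
    apply (simp, rule t_kind[OF a(1,2) _ a(3,4)], simp)
    apply (simp add: reach_cf_refl a(3))
    done
qed

lemma pay_in:
  assumes a: "ci < length (CB k)" "q < QQ k" "wh < s" "x = pre @ ds @ SEndLit # rest" "set ds \<subseteq> {S0, S1}"
    "isin (tnth tr (q div (k+1)))"
  shows "length ds - i = m \<Longrightarrow> i \<le> length ds \<Longrightarrow>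
    reach k x s (cf (A tr nx ci q (SPay c)) (length pre + 1 + i) wt wh out)
      (cf (A tr nx ci q SRewI) (length pre + length ds) wt wh (out @ incr_out c (drop i ds)))"
proof (induction m arbitrary: i c out)
  case 0
  then have i: "i = length ds" by simp
  have r: "read_in x (length pre + 1 + i) = Some SEndLit"
    using read_in_app[of 0 "[SEndLit]" "pre @ ds" rest] i a(4) by simp
  show ?case
    apply (rule t_payin_end[OF a(1,2,3)])
    using a(4,6) r i by (auto simp: isdig_def reach_cf_refl a(3))
next
  case (Suc m)
  then have i: "i < length ds" by simp
  have r: "read_in x (length pre + 1 + i) = Some (ds ! i)"
    using read_in_app[of i ds pre "SEndLit # rest"] i a(4) by simp
  have dg: "ds ! i = S0 \<or> ds ! i = S1" using a(5) i nth_mem by blast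
  have d: "drop i ds = ds ! i # drop (Suc i) ds" using i by (simp add: Cons_nth_drop_Suc)
  have IH: "reach k x s (cf (A tr nx ci q (SPay (c \<and> ds ! i = S1))) (length pre + 1 + Suc i) wt wh
       (out @ [bs ((ds ! i = S1) \<noteq> c)]))
     (cf (A tr nx ci q SRewI) (length pre + length ds) wt wh ((out @ [bs ((ds ! i = S1) \<noteq> c)]) @
       incr_out (c \<and> ds ! i = S1) (drop (Suc i) ds)))"
    using Suc.IH[of "Suc i" "c \<and> ds ! i = S1" "out @ [bs ((ds ! i = S1) \<noteq> c)]"] Suc.prems by simp
  show ?case
    apply (rule t_payin_dig[OF a(1,2,3) _ a(6) r dg])
    using a(4) i apply simp
    using IH d by simp
qed

lemma rew_in:
  assumes a: "ci < length (CB k)" "q < QQ k" "wh < s" "x = pre @ ds @ SEndLit # rest" "set ds \<subseteq> {S0, S1}"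
    "pre = [] \<or> last pre \<notin> {S0, S1}"
  shows "i \<le> length ds \<Longrightarrow> reach k x s (cf (A tr nx ci q SRewI) (length pre + i) wt wh out)
      (cf (A tr nx ci q SSep) (length pre + 1) wt wh out)"
proof (induction i)
  case 0
  have r: "\<not> isdig (read_in x (length pre))"
  proof (cases "pre = []")
    case True then show ?thesis by (simp add: read_in_def isdig_def)
  next
    case False
    then have "0 < length pre" by simp
    then have "read_in x (length pre) = Some (last pre)" using a(4) False
      by (simp add: read_in_def nth_append last_conv_nth Suc_le_eq)
    then show ?thesis using a(6) False by (auto simp: isdig_def)
  qed
  show ?case
    apply (rule t_rewi_end[OF a(1,2,3)])
    using a(4) r by (auto simp: reach_cf_refl a(3))
next
  case (Suc i)
  then have i: "i < length ds" by simp
  have r: "read_in x (length pre + 1 + i) = Some (ds ! i)"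
    using read_in_app[of i ds pre "SEndLit # rest"] i a(4) by simp
  have dg: "ds ! i = S0 \<or> ds ! i = S1" using a(5) i nth_mem by blast
  show ?case
    apply (rule t_rewi_dig[OF a(1,2,3)])
    using a(4) i r dg Suc by (auto simp: isdig_def)
qed

lemma tape_nz: "i < length l \<Longrightarrow> tape_of l i \<noteq> 0"
  by (simp add: tape_of_def)
lemma tape_bit: "i < length l \<Longrightarrow> (tape_of l i = 2 \<or> tape_of l i = 4) = (l ! i = S1)"
  by (simp add: tape_of_def)
lemma tape_z: "tape_of l (length l) = 0"
  by (simp add: tape_of_def)
lemma tape_0: "l \<noteq> [] \<Longrightarrow> tape_of l 0 = 3 \<or> tape_of l 0 = 4"
  by (simp add: tape_of_def)
lemma tape_pos: "0 < i \<Longrightarrow> tape_of l i \<noteq> 3 \<and> tape_of l i \<noteq> 4"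
  by (simp add: tape_of_def)

lemma pay_c:
  assumes a: "ci < length (CB k)" "q < QQ k" "ih \<le> Suc (length x)" "\<not> isin (tnth tr (q div (k+1)))"
    "tnth tr (q div (k+1)) \<noteq> DZ" "l \<noteq> []" "length l < s"
  shows "length l - i = m \<Longrightarrow> i \<le> length l \<Longrightarrow>
    reach k x s (cf (A tr nx ci q (SPay c)) ih (tape_of l) i out)
      (cf (A tr nx ci q SRewC) ih (tape_of l) (length l - 1) (out @ incr_out c (drop i l)))"
proof (induction m arbitrary: i c out)
  case 0
  then have i: "i = length l" by simp
  show ?case
    apply (rule t_payc_z[OF a(1,2) _ a(3,4,5)])
    using i a(7) by (auto simp: tape_z reach_cf_refl)
next
  case (Suc m)
  then have i: "i < length l" by simp
  have d: "drop i l = l ! i # drop (Suc i) l" using i by (simp add: Cons_nth_drop_Suc)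
  have IH: "reach k x s (cf (A tr nx ci q (SPay (c \<and> l ! i = S1))) ih (tape_of l) (Suc i)
       (out @ [bs ((l ! i = S1) \<noteq> c)]))
     (cf (A tr nx ci q SRewC) ih (tape_of l) (length l - 1) ((out @ [bs ((l ! i = S1) \<noteq> c)]) @
       incr_out (c \<and> l ! i = S1) (drop (Suc i) l)))"
    using Suc.IH[of "Suc i" "c \<and> l ! i = S1" "out @ [bs ((l ! i = S1) \<noteq> c)]"] Suc.prems by simp
  show ?case
    apply (rule t_payc_nz[OF a(1,2) _ a(3,4,5)])
    using i a(7) apply simp
    using i tape_nz apply blast
    using IH d tape_bit[OF i] by simp
qed

lemma rew_c:
  assumes a: "ci < length (CB k)" "q < QQ k" "ih \<le> Suc (length x)" "length l < s"
  shows "i < length l \<Longrightarrow> reach k x s (cf (A tr nx ci q SRewC) ih (tape_of l) i out)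
      (cf (A tr nx ci q SSep) ih (tape_of l) 0 out)"
proof (induction i)
  case 0
  then have "l \<noteq> []" by auto
  then show ?case
    apply (intro t_rewc_0[OF a(1,2) _ a(3)])
    using a(4) by (auto simp: tape_0 reach_cf_refl)
next
  case (Suc i)
  show ?case
    apply (rule t_rewc[OF a(1,2) _ a(3)])
    using Suc a(4) tape_pos[of "Suc i" l] by auto
qed

lemma name_print:
  assumes a: "ci < length (CB k)" "q < QQ k" "ih \<le> Suc (length x)" "0 < c" "length (bin c) < s"
    "isin (tnth tr (q div (k+1))) \<Longrightarrow> inp x ih v"
  shows "reach k x s (cf (A tr nx ci q (SBit 0)) ih (tape_of (bin c)) 0 out)
     (cf (A tr nx ci q SSep) ih (tape_of (bin c)) 0
        (out @ bin (cname k (CB k ! ci ! q) (dval v c (tnth tr (q div (k+1)))))))"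
proof -
  define d where "d = tnth tr (q div (k+1))"
  define j where "j = CB k ! ci ! q"
  define T where "T = tape_of (bin c)"
  have s0: "0 < s" using a(5) by simp
  have jN: "j < NN k" using CB_elem[OF a(1,2)] by (simp add: j_def)
  have r1: "reach k x s (cf (A tr nx ci q (SBit 0)) ih T 0 out)
     (cf (A tr nx ci q (SKind 0)) ih T 0 (out @ nbits (NN k) j))"
    using bits_loop[OF a(1,2) s0 a(3), of 0 "NN k" tr nx T out] by (simp add: nbits_map j_def)
  have r2: "reach k x s (cf (A tr nx ci q (SKind 0)) ih T 0 (out @ nbits (NN k) j))
     (cf (A tr nx ci q (SPay (icarry d))) ih T 0 (out @ nbits (NN k) j @ nbits 3 (dkind d)))"
    using kind_seq[OF a(1,2) s0 a(3), of tr nx T "out @ nbits (NN k) j"] by (simp add: d_def)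
  have r3: "reach k x s (cf (A tr nx ci q (SPay (icarry d))) ih T 0 (out @ nbits (NN k) j @ nbits 3 (dkind d)))
     (cf (A tr nx ci q SSep) ih T 0 (out @ nbits (NN k) j @ nbits 3 (dkind d) @ pay_str v c d))"
  proof (cases "isin d")
    case True
    then have pd: "pay_str v c d = incr_out True (bin v)" "icarry d = True"
      by (cases d; simp add: pay_str_def)+
    obtain pre rest where x: "x = pre @ bin v @ SEndLit # rest" and ih: "ih = length pre + 1"
       and nd: "pre = [] \<or> last pre \<notin> {S0, S1}"
      using a(6) True by (auto simp: inp_def d_def)
    have p1: "reach k x s (cf (A tr nx ci q (SPay True)) (length pre + 1 + 0) T 0 (out @ nbits (NN k) j @ nbits 3 (dkind d)))
       (cf (A tr nx ci q SRewI) (length pre + length (bin v)) T 0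
          ((out @ nbits (NN k) j @ nbits 3 (dkind d)) @ incr_out True (drop 0 (bin v))))"
      using pay_in[OF a(1,2) s0 x bin_digits True[unfolded d_def], where i=0 and m="length (bin v)" and c=True
        and nx=nx and wt=T and out="out @ nbits (NN k) j @ nbits 3 (dkind d)"] by simp
    have p2: "reach k x s (cf (A tr nx ci q SRewI) (length pre + length (bin v)) T 0
          ((out @ nbits (NN k) j @ nbits 3 (dkind d)) @ incr_out True (drop 0 (bin v))))
       (cf (A tr nx ci q SSep) (length pre + 1) T 0
          ((out @ nbits (NN k) j @ nbits 3 (dkind d)) @ incr_out True (drop 0 (bin v))))"
      using rew_in[OF a(1,2) s0 x bin_digits nd, of "length (bin v)"] by simp
    show ?thesis using reach_trans[OF p1 p2] pd ih by simp
  next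
    case False
    show ?thesis
    proof (cases "d = DZ")
      case True
      then show ?thesis
        by (intro t_payz[OF a(1,2) s0 a(3)]) (simp_all add: d_def pay_str_def reach_cf_refl s0)
    next
      case F2: False
      have pd: "pay_str v c d = incr_out (icarry d) (bin c)"
        using False F2 by (cases d) (simp_all add: pay_str_def)
      have ls: "length (bin c) - 1 < length (bin c)" by simp
      have p1: "reach k x s (cf (A tr nx ci q (SPay (icarry d))) ih T 0 (out @ nbits (NN k) j @ nbits 3 (dkind d)))
         (cf (A tr nx ci q SRewC) ih T (length (bin c) - 1)
            ((out @ nbits (NN k) j @ nbits 3 (dkind d)) @ incr_out (icarry d) (drop 0 (bin c))))"
        using pay_c[OF a(1,2,3) False[unfolded d_def] F2[unfolded d_def] bin_ne a(5), where i=0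
          and m="length (bin c)" and c="icarry d" and nx=nx and out="out @ nbits (NN k) j @ nbits 3 (dkind d)"]
        by (simp add: d_def T_def)
      have p2: "reach k x s (cf (A tr nx ci q SRewC) ih T (length (bin c) - 1)
            ((out @ nbits (NN k) j @ nbits 3 (dkind d)) @ incr_out (icarry d) (drop 0 (bin c))))
         (cf (A tr nx ci q SSep) ih T 0
            ((out @ nbits (NN k) j @ nbits 3 (dkind d)) @ incr_out (icarry d) (drop 0 (bin c))))"
        using rew_c[OF a(1,2,3) a(5) ls] by (simp add: T_def)
      show ?thesis using reach_trans[OF p1 p2] pd by simp
    qed
  qed
  have "bin (cname k j (dval v c d)) = nbits (NN k) j @ nbits 3 (dkind d) @ pay_str v c d"
    by (rule bin_name[OF jN a(4)])
  then show ?thesis using reach_trans[OF reach_trans[OF r1 r2] r3] by (simp add: d_def j_def T_def)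
qed

lemma div3: "q < QQ k \<Longrightarrow> q div (k+1) < 3"
  by (simp add: QQ_def less_mult_imp_div_less)

lemma div3': "q < QQ k \<Longrightarrow> q div Suc k < 3"
  using div3 by simp

lemma q_loop:
  assumes a: "ci < length (CB k)" "ih \<le> Suc (length x)" "0 < c" "length (bin c) < s"
    "\<forall>i<3. isin (tnth tr i) \<longrightarrow> inp x ih v"
  shows "QQ k - q = m \<Longrightarrow> q < QQ k \<Longrightarrow> reach k x s (cf (A tr nx ci q (SBit 0)) ih (tape_of (bin c)) 0 out)
    (cf (A tr nx ci (QQ k - 1) SCl) ih (tape_of (bin c)) 0
       (out @ concat (map (\<lambda>q. bin (cname k (CB k ! ci ! q) (dval v c (tnth tr (q div (k+1))))) @ [SEndLit]) [q..<QQ k])))"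
proof (induction m arbitrary: q out)
  case 0 then show ?case by simp
next
  case (Suc m)
  let ?nm = "\<lambda>q. bin (cname k (CB k ! ci ! q) (dval v c (tnth tr (q div (k+1)))))"
  have s0: "0 < s" using a(4) by simp
  have np: "reach k x s (cf (A tr nx ci q (SBit 0)) ih (tape_of (bin c)) 0 out)
     (cf (A tr nx ci q SSep) ih (tape_of (bin c)) 0 (out @ ?nm q))"
    using name_print[OF a(1) Suc.prems(2) a(2,3,4)] a(5) div3[OF Suc.prems(2)] by blast
  have u: "[q..<QQ k] = q # [Suc q..<QQ k]" using Suc.prems by (simp add: upt_conv_Cons)
  have nxt: "reach k x s (cf (A tr nx ci q SSep) ih (tape_of (bin c)) 0 (out @ ?nm q))
     (cf (A tr nx ci (QQ k - 1) SCl) ih (tape_of (bin c)) 0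
       (out @ concat (map (\<lambda>q. ?nm q @ [SEndLit]) [q..<QQ k])))"
  proof (rule t_sep[OF a(1) Suc.prems(2) s0 a(2)])
    show "reach k x s (cf (if Suc q < QQ k then A tr nx ci (Suc q) (SBit 0) else A tr nx ci q SCl) ih (tape_of (bin c)) 0
      ((out @ ?nm q) @ [SEndLit])) (cf (A tr nx ci (QQ k - 1) SCl) ih (tape_of (bin c)) 0
       (out @ concat (map (\<lambda>q. ?nm q @ [SEndLit]) [q..<QQ k])))"
    proof (cases "Suc q < QQ k")
      case True
      then show ?thesis using Suc.IH[of "Suc q" "(out @ ?nm q) @ [SEndLit]"] Suc.prems u by simp
    next
      case False
      then have "q = QQ k - 1" "[Suc q..<QQ k] = []" using Suc.prems by auto
      then show ?thesis using False u by (simp add: reach_cf_refl s0)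
    qed
  qed
  show ?case using reach_trans[OF np nxt] .
qed

lemma ci_loop:
  assumes a: "ih \<le> Suc (length x)" "0 < c" "length (bin c) < s"
    "\<forall>i<3. isin (tnth tr i) \<longrightarrow> inp x ih v"
  shows "length (CB k) - ci = m \<Longrightarrow> ci < length (CB k) \<Longrightarrow>
    reach k x s (cf (A tr nx ci 0 (SBit 0)) ih (tape_of (bin c)) 0 out)
    (cf (P nx) ih (tape_of (bin c)) 0
       (out @ concat (map (\<lambda>ci. concat (map (\<lambda>q. bin (cname k (CB k ! ci ! q) (dval v c (tnth tr (q div (k+1))))) @ [SEndLit]) [0..<QQ k]) @ [SEndClause]) [ci..<length (CB k)])))"
proof (induction m arbitrary: ci out)
  case 0 then show ?case by simp
next
  case (Suc m)
  let ?cl = "\<lambda>ci. concat (map (\<lambda>q. bin (cname k (CB k ! ci ! q) (dval v c (tnth tr (q div (k+1))))) @ [SEndLit]) [0..<QQ k])"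
  have s0: "0 < s" using a(3) by simp
  have ql: "reach k x s (cf (A tr nx ci 0 (SBit 0)) ih (tape_of (bin c)) 0 out)
     (cf (A tr nx ci (QQ k - 1) SCl) ih (tape_of (bin c)) 0 (out @ ?cl ci))"
    using q_loop[OF Suc.prems(2) a, where q=0 and m="QQ k" and nx=nx and out=out] by simp
  have u: "[ci..<length (CB k)] = ci # [Suc ci..<length (CB k)]" using Suc.prems by (simp add: upt_conv_Cons)
  have q1: "QQ k - 1 < QQ k" by simp
  have nxt: "reach k x s (cf (A tr nx ci (QQ k - 1) SCl) ih (tape_of (bin c)) 0 (out @ ?cl ci))
     (cf (P nx) ih (tape_of (bin c)) 0 (out @ concat (map (\<lambda>ci. ?cl ci @ [SEndClause]) [ci..<length (CB k)])))"
  proof (rule t_cl[OF Suc.prems(2) q1 s0 a(1)])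
    show "reach k x s (cf (if Suc ci < length (CB k) then A tr nx (Suc ci) 0 (SBit 0) else P nx) ih (tape_of (bin c)) 0
      ((out @ ?cl ci) @ [SEndClause])) (cf (P nx) ih (tape_of (bin c)) 0
       (out @ concat (map (\<lambda>ci. ?cl ci @ [SEndClause]) [ci..<length (CB k)])))"
    proof (cases "Suc ci < length (CB k)")
      case True
      then show ?thesis using Suc.IH[of "Suc ci" "(out @ ?cl ci) @ [SEndClause]"] Suc.prems u by simp
    next
      case False
      then have "[Suc ci..<length (CB k)] = []" by auto
      then show ?thesis using False u by (simp add: reach_cf_refl s0)
    qed
  qed
  show ?case using reach_trans[OF ql nxt] .
qed

lemma tnth_tval: "i < 3 \<Longrightarrow> tnth (tval v c tr) i = dval v c (tnth tr i)"
proof -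
  assume "i < 3"
  then have "i = 0 \<or> i = 1 \<or> i = 2" by auto
  then show ?thesis by (auto simp: tnth_def tval_def)
qed

lemma map_idx: "map f xs = map (\<lambda>i. f (xs ! i)) [0..<length xs]"
  by (rule nth_equalityI) simp_all

lemma enc_amp: "enc_nae (amp k (tval v c tr)) =
  concat (map (\<lambda>ci. concat (map (\<lambda>q. bin (cname k (CB k ! ci ! q) (dval v c (tnth tr (q div (k+1))))) @ [SEndLit]) [0..<QQ k]) @ [SEndClause]) [0..<length (CB k)])"
proof -
  have "enc_nae (amp k (tval v c tr)) = concat (map (\<lambda>J. concat (map (\<lambda>q. bin (cname k (J!q) (tnth (tval v c tr) (q div (k+1)))) @ [SEndLit]) [0..<QQ k]) @ [SEndClause]) (CB k))"
    by (simp add: enc_nae_def amp_def comp_def)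
  also have "\<dots> = concat (map (\<lambda>ci. concat (map (\<lambda>q. bin (cname k (CB k ! ci ! q) (tnth (tval v c tr) (q div (k+1)))) @ [SEndLit]) [0..<QQ k]) @ [SEndClause]) [0..<length (CB k)])"
    by (subst map_idx) simp
  also have "\<dots> = concat (map (\<lambda>ci. concat (map (\<lambda>q. bin (cname k (CB k ! ci ! q) (dval v c (tnth tr (q div (k+1))))) @ [SEndLit]) [0..<QQ k]) @ [SEndClause]) [0..<length (CB k)])"
    by (intro arg_cong[where f=concat] map_cong refl arg_cong2[where f="(@)"]) (simp add: tnth_tval div3')
  finally show ?thesis .
qed

lemma amp_run:
  assumes a: "ih \<le> Suc (length x)" "0 < c" "length (bin c) < s"
    "\<forall>i<3. isin (tnth tr i) \<longrightarrow> inp x ih v"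
  shows "reach k x s (cf (A tr nx 0 0 (SBit 0)) ih (tape_of (bin c)) 0 out)
    (cf (P nx) ih (tape_of (bin c)) 0 (out @ enc_nae (amp k (tval v c tr))))"
  using ci_loop[OF a, where m="length (CB k)" and ci=0 and nx=nx and out=out] CB_ne[of k] by (simp add: enc_amp)

lemma skip_run:
  assumes a: "wh < s" "x = pre @ ds @ SEndLit # rest" "set ds \<subseteq> {S0, S1}"
  shows "length ds - i = m \<Longrightarrow> i \<le> length ds \<Longrightarrow>
    reach k x s (cf (P Skip) (length pre + 1 + i) wt wh out) (cf (P IncA) (length pre + length ds + 2) wt wh out)"
proof (induction m arbitrary: i)
  case 0
  then have i: "i = length ds" by simp
  have r: "read_in x (length pre + 1 + i) = Some SEndLit"
    using read_in_app[of 0 "[SEndLit]" "pre @ ds" rest] i a(2) by simp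
  show ?case
    apply (rule t_skip_end[OF a(1)])
    using a(2) r i by (auto simp: isdig_def reach_cf_refl a(1))
next
  case (Suc m)
  then have i: "i < length ds" by simp
  have r: "read_in x (length pre + 1 + i) = Some (ds ! i)"
    using read_in_app[of i ds pre "SEndLit # rest"] i a(2) by simp
  have dg: "ds ! i = S0 \<or> ds ! i = S1" using a(3) i nth_mem by blast
  show ?case
    apply (rule t_skip_dig[OF a(1)])
    using a(2) i apply simp
    using r dg apply (auto simp: isdig_def)[1]
    using Suc.IH[of "Suc i"] Suc.prems by simp
qed

lemma incb_run:
  assumes a: "ih \<le> Suc (length x)" "length Y < s" "Y \<noteq> []"
  shows "i < length Y \<Longrightarrow> reach k x s (cf (P IncB) ih (tape_of Y) i out) (cf (P LitNext) ih (tape_of Y) 0 out)"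
proof (induction i)
  case 0
  show ?case
    apply (rule t_incb_0)
    using a tape_0[OF a(3)] by (auto simp: reach_cf_refl)
next
  case (Suc i)
  show ?case
    apply (rule t_incb)
    using Suc a tape_pos[of "Suc i" Y] by auto
qed

definition tcode :: "nat \<Rightarrow> sym \<Rightarrow> nat" where
  "tcode i b = (if i = 0 then (if b = S1 then 4 else 3) else (if b = S1 then 2 else 1))"

lemma tape_upd: "i < length X \<Longrightarrow> (tape_of X)(i := tcode i b) = tape_of (X[i := b])"
  by (rule ext) (auto simp: tape_of_def tcode_def nth_list_update)

lemma tape_ext: "X \<noteq> [] \<Longrightarrow> (tape_of X)(length X := 2) = tape_of (X @ [S1])"
  by (rule ext) (auto simp: tape_of_def nth_append)

lemma incr_rep: "incr_out True (replicate i S1 @ r) = replicate i S0 @ incr_out True r"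
  by (induction i) (auto simp: bs_def)

lemma take_rep: "(\<forall>j<i. l ! j = S1) \<Longrightarrow> i \<le> length l \<Longrightarrow> take i l = replicate i S1"
  by (rule nth_equalityI) auto

lemma length_incr: "length l \<le> length (incr_out c l)"
  by (induction l arbitrary: c) auto

lemma inca_run:
  assumes a0: "ih \<le> Suc (length x)" "length (incr_out True l) < s" "l \<noteq> []" "set l \<subseteq> {S0, S1}"
  shows "length l - i = m \<Longrightarrow> i \<le> length l \<Longrightarrow> (\<forall>j<i. l ! j = S1) \<Longrightarrow>
    reach k x s (cf (P IncA) ih (tape_of (replicate i S0 @ drop i l)) i out)
      (cf (P LitNext) ih (tape_of (incr_out True l)) 0 out)"
proof (induction m arbitrary: i)
  have a: "ih \<le> Suc (length x)" "length l < s" "l \<noteq> []" "set l \<subseteq> {S0, S1}"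
    using a0 length_incr[of l True] by auto
  case 0
  then have i: "i = length l" by simp
  have e1: "incr_out True l = replicate i S0 @ [S1]"
    using incr_rep[of i "[]"] take_rep[OF 0(3)] i by simp
  have X: "replicate i S0 @ drop i l = replicate i S0" using i by simp
  have t0: "tape_of (replicate i S0) i = 0" using tape_z[of "replicate i S0"] by simp
  have ip: "0 < i" using i a(3) by simp
  have t2: "(tape_of (replicate i S0))(i := 2) = tape_of (replicate i S0 @ [S1])"
    using tape_ext[of "replicate i S0"] ip by simp
  show ?case unfolding X
    apply (rule t_inca_e)
    using i a(2) apply simp
    using a(1) apply simp
    using t0 apply simp
    using t0 apply simp
    using t0 apply simp
    unfolding t2 e1
    apply (rule incb_run)
    using a(1) apply simp
    using a0(2) e1 apply simp
    apply simp
    apply simp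
    done
next
  have a: "ih \<le> Suc (length x)" "length l < s" "l \<noteq> []" "set l \<subseteq> {S0, S1}"
    using a0 length_incr[of l True] by auto
  case (Suc m)
  then have i: "i < length l" by simp
  let ?X = "replicate i S0 @ drop i l"
  have xi: "?X ! i = l ! i" using i by (simp add: nth_append)
  have lx: "i < length ?X" using i by simp
  have dg: "l ! i = S0 \<or> l ! i = S1" using a(4) i nth_mem by blast
  show ?case
  proof (cases "l ! i = S1")
    case True
    have upd: "?X[i := S0] = replicate (Suc i) S0 @ drop (Suc i) l"
      using i by (simp add: list_update_append Cons_nth_drop_Suc[symmetric] replicate_append_same)
    have IH: "reach k x s (cf (P IncA) ih (tape_of (replicate (Suc i) S0 @ drop (Suc i) l)) (Suc i) out)
      (cf (P LitNext) ih (tape_of (incr_out True l)) 0 out)"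
      using Suc.IH[of "Suc i"] Suc.prems True by (auto simp: less_Suc_eq)
    have tu: "(tape_of ?X)(i := tcode i S0) = tape_of (replicate (Suc i) S0 @ drop (Suc i) l)"
      using tape_upd[OF lx, of S0] upd by simp
    show ?thesis
    proof (cases "i = 0")
      case True
      then show ?thesis
        apply -
        apply (rule t_inca_4)
        using a(2) i apply simp
        using a(1) apply simp
        using \<open>l ! i = S1\<close> xi lx apply (simp add: tape_of_def)
        using IH tu by (simp add: tcode_def)
    next
      case False
      then show ?thesis
        apply -
        apply (rule t_inca_2)
        using a(2) i apply simp
        using a(1) apply simp
        using \<open>l ! i = S1\<close> xi lx apply (simp add: tape_of_def)
        using IH tu by (simp add: tcode_def)
    qed
  next
    case False
    then have l0: "l ! i = S0" using dg by simp
    have tk: "take i l = replicate i S1" using take_rep Suc.prems by simp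
    have inc: "incr_out True l = ?X[i := S1]"
    proof -
      define r where "r = drop (Suc i) l"
      have dl: "drop i l = S0 # r" using i l0 unfolding r_def by (simp add: Cons_nth_drop_Suc[symmetric])
      have l_eq: "l = replicate i S1 @ S0 # r" using tk dl append_take_drop_id[of i l] by simp
      have rd: "set r \<subseteq> {S0, S1}" using a(4) unfolding r_def by (meson set_drop_subset subset_trans)
      have "incr_out True (replicate i S1 @ S0 # r) = replicate i S0 @ S1 # r"
        using incr_rep[of i "S0 # r"] incr_False[OF rd] by (simp add: bs_def)
      then have "incr_out True l = replicate i S0 @ S1 # drop (Suc i) l"
        using l_eq unfolding r_def by simp
      also have "\<dots> = ?X[i := S1]" using i l0
        by (simp add: list_update_append Cons_nth_drop_Suc[symmetric])
      finally show ?thesis .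
    qed
    have tu: "(tape_of ?X)(i := tcode i S1) = tape_of (incr_out True l)"
      using tape_upd[OF lx, of S1] inc by simp
    show ?thesis
    proof (cases "i = 0")
      case True
      then show ?thesis
        apply -
        apply (rule t_inca_3)
        using a(2) i apply simp
        using a(1) apply simp
        using l0 xi lx apply (simp add: tape_of_def)
        using tu a(2) by (simp add: tcode_def reach_cf_refl[of 0 s])
    next
      case F2: False
      have lt: "length (incr_out True l) = length l" using inc i by simp
      show ?thesis
        apply (rule t_inca_e)
        using a(2) i apply simp
        using a(1) apply simp
        using l0 xi lx F2 apply (simp_all add: tape_of_def)[3]
        using tu F2 apply (simp add: tcode_def)
        apply (rule incb_run)
        using a a0(2) lt i F2 by auto
    qed
  qed
qed

lemma inc_run:
  assumes a: "ih \<le> Suc (length x)" "length (bin (Suc c)) < s"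
  shows "reach k x s (cf (P IncA) ih (tape_of (bin c)) 0 out) (cf (P LitNext) ih (tape_of (bin (Suc c))) 0 out)"
  using inca_run[OF a(1) _ bin_ne bin_digits, where i=0 and m="length (bin c)"] a(2) by (simp add: incr_bin)

lemma enc_nae_append[simp]: "enc_nae (a @ b) = enc_nae a @ enc_nae b"
  by (simp add: enc_nae_def)

lemma lit_trs_eq: "lit_trs f pol = [(DP,DQ,DQ), tr2 f pol, (DD True, DE True, DE True)]"
  by (simp add: lit_trs_def tr2_def)

lemma len_bin_mono: "a \<le> b \<Longrightarrow> length (bin a) \<le> length (bin b)"
  using floor_log_mono by (simp add: len_bin mono_def)

lemma lit_run:
  assumes a: "x = pre @ enc_lit (pol, v) @ rest" "pre = [] \<or> last pre \<notin> {S0,S1}" "0 < c"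
    "length (bin (Suc c)) < s"
  shows "reach k x s (cf (P (LitS f)) (length pre + 1) (tape_of (bin c)) 0 out)
   (cf (P LitNext) (length pre + length (enc_lit (pol,v)) + 1) (tape_of (bin (Suc c))) 0
      (out @ enc_nae (concat (map (amp k) (map (tval v c) (lit_trs f pol))))))"
proof -
  define pre' where "pre' = pre @ (if pol then [] else [SNeg])"
  define T where "T = tape_of (bin c)"
  define vs where "vs = length pre' + 1"
  have x': "x = pre' @ bin v @ SEndLit # rest" using a(1) by (simp add: pre'_def enc_lit_def)
  have nd': "pre' = [] \<or> last pre' \<notin> {S0,S1}" using a(2) by (auto simp: pre'_def)
  have inp: "inp x vs v" using x' nd' by (auto simp: inp_def vs_def)
  have lc: "length (bin c) < s" using a(4) len_bin_mono[of c "Suc c"] by simp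
  have s0: "0 < s" using lc by simp
  have vsb: "vs \<le> Suc (length x)" using x' by (simp add: vs_def)
  have ii: "\<forall>i<3. isin (tnth tr i) \<longrightarrow> inp x vs v" for tr using inp by blast
  let ?o1 = "out @ enc_nae (amp k (tval v c (DP,DQ,DQ)))"
  let ?o2 = "?o1 @ enc_nae (amp k (tval v c (tr2 f pol)))"
  let ?o3 = "?o2 @ enc_nae (amp k (tval v c (DD True, DE True, DE True)))"
  have r0: "reach k x s (cf (P (LitS f)) (length pre + 1) T 0 out) (cf (P (LitV f pol)) vs T 0 out)"
  proof (cases pol)
    case True
    have "read_in x (length pre + 1 + 0) = Some (bin v ! 0)"
      using read_in_app[of 0 "bin v" pre "SEndLit # rest"] x' True by (simp add: pre'_def)
    moreover have "bin v ! 0 \<in> {S0, S1}" using bin_digits[of v] bin_ne[of v] nth_mem by blast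
    ultimately have "read_in x (length pre + 1) \<noteq> Some SNeg" by auto
    then show ?thesis using True x'
      by (intro t_lits_pos[OF s0]) (auto simp: vs_def pre'_def reach_cf_refl s0)
  next
    case False
    have "read_in x (length pre + 1 + 0) = Some SNeg"
      using read_in_app[of 0 "[SNeg]" pre "bin v @ SEndLit # rest"] x' False by (simp add: pre'_def)
    then show ?thesis using False x'
      by (intro t_lits_neg[OF s0]) (auto simp: vs_def pre'_def reach_cf_refl s0)
  qed
  have r1: "reach k x s (cf (P (LitV f pol)) vs T 0 out) (cf (P (T2 f pol)) vs T 0 ?o1)"
    by (rule t_litv[OF s0 vsb]) (unfold T_def, rule amp_run[OF vsb a(3) lc ii])
  have r2: "reach k x s (cf (P (T2 f pol)) vs T 0 ?o1) (cf (P T3) vs T 0 ?o2)"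
    by (rule t_t2[OF s0 vsb]) (unfold T_def, rule amp_run[OF vsb a(3) lc ii])
  have r3: "reach k x s (cf (P T3) vs T 0 ?o2) (cf (P Skip) vs T 0 ?o3)"
    by (rule t_t3[OF s0 vsb]) (unfold T_def, rule amp_run[OF vsb a(3) lc ii])
  have r4: "reach k x s (cf (P Skip) vs T 0 ?o3) (cf (P IncA) (length pre' + length (bin v) + 2) T 0 ?o3)"
    using skip_run[OF s0 x' bin_digits, where i=0 and m="length (bin v)" and wt=T and out="?o3"]
    by (simp add: vs_def)
  have lb: "length pre' + length (bin v) + 2 \<le> Suc (length x)" using x' by simp
  have r5: "reach k x s (cf (P IncA) (length pre' + length (bin v) + 2) T 0 ?o3)
      (cf (P LitNext) (length pre' + length (bin v) + 2) (tape_of (bin (Suc c))) 0 ?o3)"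
    unfolding T_def by (rule inc_run[OF lb a(4)])
  have pos: "length pre' + length (bin v) + 2 = length pre + length (enc_lit (pol,v)) + 1"
    by (simp add: pre'_def enc_lit_def)
  have o: "?o3 = out @ enc_nae (concat (map (amp k) (map (tval v c) (lit_trs f pol))))"
    by (simp add: lit_trs_eq)
  show ?thesis using reach_trans[OF reach_trans[OF reach_trans[OF reach_trans[OF reach_trans[OF r0 r1] r2] r3] r4] r5]
    unfolding pos o T_def .
qed

lemma enc_lit_hd: "enc_lit l \<noteq> [] \<and> enc_lit l ! 0 \<noteq> SEndClause"
proof -
  have "bin (snd l) ! 0 \<in> {S0, S1}" using bin_digits[of "snd l"] bin_ne[of "snd l"] nth_mem by blast
  then show ?thesis by (auto simp: enc_lit_def nth_append)
qed

lemma enc_lit_last: "last (enc_lit l) = SEndLit"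
  by (simp add: enc_lit_def)

lemma lits_run:
  assumes c0: "0 < c"
  shows "ls \<noteq> [] \<Longrightarrow> x = pre @ concat (map enc_lit ls) @ SEndClause # rest \<Longrightarrow> (pre = [] \<or> last pre \<notin> {S0,S1}) \<Longrightarrow>
    length (bin (c + length ls)) < s \<Longrightarrow>
   reach k x s (cf (P (LitS f)) (length pre + 1) (tape_of (bin c)) 0 out)
     (cf (P LitNext) (length pre + length (concat (map enc_lit ls)) + 1) (tape_of (bin (c + length ls))) 0
        (out @ enc_nae (concat (map (amp k) (g0_lits f c ls)))))"
  using c0
proof (induction ls arbitrary: f c pre out)
  case Nil then show ?case by simp
next
  case (Cons l ls)
  obtain pol v where l: "l = (pol, v)" by (cases l)
  let ?rest = "concat (map enc_lit ls) @ SEndClause # rest"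
  have x: "x = pre @ enc_lit (pol, v) @ ?rest" using Cons.prems(2) l by simp
  have b1: "length (bin (Suc c)) < s"
    using Cons.prems(4) len_bin_mono[of "Suc c" "c + length (l#ls)"] by simp
  have r1: "reach k x s (cf (P (LitS f)) (length pre + 1) (tape_of (bin c)) 0 out)
   (cf (P LitNext) (length pre + length (enc_lit (pol,v)) + 1) (tape_of (bin (Suc c))) 0
      (out @ enc_nae (concat (map (amp k) (map (tval v c) (lit_trs f pol))))))"
    by (rule lit_run[OF x Cons.prems(3) Cons.prems(5) b1])
  show ?case
  proof (cases "ls = []")
    case True
    then show ?thesis using r1 l by simp
  next
    case False
    let ?pre = "pre @ enc_lit (pol, v)"
    have x2: "x = ?pre @ concat (map enc_lit ls) @ SEndClause # rest" using x by simp
    have nd2: "?pre = [] \<or> last ?pre \<notin> {S0,S1}" using enc_lit_hd[of "(pol,v)"] by (simp add: enc_lit_last)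
    have b2: "length (bin (Suc c + length ls)) < s" using Cons.prems(4) by simp
    have IH: "reach k x s (cf (P (LitS False)) (length ?pre + 1) (tape_of (bin (Suc c))) 0
        (out @ enc_nae (concat (map (amp k) (map (tval v c) (lit_trs f pol))))))
      (cf (P LitNext) (length ?pre + length (concat (map enc_lit ls)) + 1) (tape_of (bin (Suc c + length ls))) 0
        ((out @ enc_nae (concat (map (amp k) (map (tval v c) (lit_trs f pol))))) @
          enc_nae (concat (map (amp k) (g0_lits False (Suc c) ls)))))"
      using Cons.IH[where f=False and c="Suc c" and pre="pre @ enc_lit (pol, v)"
        and out="out @ enc_nae (concat (map (amp k) (map (tval v c) (lit_trs f pol))))", OF False x2 nd2 b2]
      by simp
    obtain l2 ls2 where ls: "ls = l2 # ls2" using False by (cases ls) auto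
    have rd: "read_in x (length ?pre + 1 + 0) = Some (enc_lit l2 ! 0)"
      using read_in_app[of 0 "enc_lit l2" ?pre "concat (map enc_lit ls2) @ SEndClause # rest"] x2 ls enc_lit_hd[of l2]
      by simp
    have s0: "0 < s" using b1 by simp
    have r2: "reach k x s (cf (P LitNext) (length pre + length (enc_lit (pol,v)) + 1) (tape_of (bin (Suc c))) 0
        (out @ enc_nae (concat (map (amp k) (map (tval v c) (lit_trs f pol))))))
      (cf (P LitNext) (length ?pre + length (concat (map enc_lit ls)) + 1) (tape_of (bin (Suc c + length ls))) 0
        ((out @ enc_nae (concat (map (amp k) (map (tval v c) (lit_trs f pol))))) @
          enc_nae (concat (map (amp k) (g0_lits False (Suc c) ls)))))"
      apply (rule t_ln_lit[OF s0])
      using x2 apply simp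
      using rd enc_lit_hd[of l2] apply simp
      using IH by simp
    show ?thesis using reach_trans[OF r1 r2] l by (simp add: add.assoc)
  qed
qed

lemma clause_run:
  assumes a: "x = pre @ concat (map enc_lit C) @ SEndClause # rest" "pre = [] \<or> last pre \<notin> {S0,S1}" "0 < c"
    "length (bin (c + length C)) < s"
  shows "reach k x s (cf (P ClBegin) (length pre + 1) (tape_of (bin c)) 0 out)
    (cf (P ClBegin) (length pre + length (concat (map enc_lit C)) + 2) (tape_of (bin (c + length C))) 0
      (out @ enc_nae (concat (map (amp k) (g0_lits True c C @ [tval 0 (c + length C) (endtr C)])))))"
proof -
  have s0: "0 < s" using a(4) by simp
  have c1: "0 < c + length C" using a(3) by simp
  have noin: "\<forall>i<3. isin (tnth (DD False, DZ, DZ) i) \<longrightarrow> inp x ih 0" for ih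
  proof (intro allI impI)
    fix i assume "i < 3" "isin (tnth (DD False, DZ, DZ) i)"
    then have "i = 0 \<or> i = 1 \<or> i = 2" by auto
    then show "inp x ih 0" using \<open>isin _\<close> by (auto simp: tnth_def)
  qed
  have noin0: "\<forall>i<3. isin (tnth (DZ, DZ, DZ) i) \<longrightarrow> inp x ih 0" for ih
  proof (intro allI impI)
    fix i assume "i < 3" "isin (tnth (DZ, DZ, DZ) i)"
    then have "i = 0 \<or> i = 1 \<or> i = 2" by auto
    then show "inp x ih 0" using \<open>isin _\<close> by (auto simp: tnth_def)
  qed
  let ?p = "length pre + length (concat (map enc_lit C)) + 1"
  have rdE: "read_in x ?p = Some SEndClause"
    using read_in_app[of 0 "[SEndClause]" "pre @ concat (map enc_lit C)" rest] a(1) by simp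
  have pb: "?p \<le> length x" using a(1) by simp
  show ?thesis
  proof (cases "C = []")
    case True
    show ?thesis
      apply (rule t_clb_end[OF s0])
      using a(1) apply simp
      using rdE True apply simp
      apply (rule reach_trans[OF amp_run[where v=0]])
      using a(1) apply simp
      using a(3) apply simp
      using a(4) True apply simp
      using noin0 apply blast
      apply (rule t_after[OF s0])
      using pb True apply simp
      using True s0 by (simp add: endtr_def reach_cf_refl)
  next
    case False
    obtain l2 C2 where C: "C = l2 # C2" using False by (cases C) auto
    have rd: "read_in x (length pre + 1 + 0) = Some (enc_lit l2 ! 0)"
      using read_in_app[of 0 "enc_lit l2" pre "concat (map enc_lit C2) @ SEndClause # rest"] a(1) C enc_lit_hd[of l2]
      by simp
    have L: "reach k x s (cf (P (LitS True)) (length pre + 1) (tape_of (bin c)) 0 out)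
     (cf (P LitNext) ?p (tape_of (bin (c + length C))) 0
        (out @ enc_nae (concat (map (amp k) (g0_lits True c C)))))"
      using lits_run[OF a(3) False a(1) a(2) a(4)] by simp
    show ?thesis
      apply (rule t_clb_lit[OF s0])
      using a(1) apply simp
      using rd apply simp
      using enc_lit_hd[of l2] apply simp
      apply (rule reach_trans[OF L])
      apply (rule t_ln_end[OF s0])
      using pb apply simp
      using rdE apply simp
      apply (rule reach_trans[OF amp_run[where v=0]])
      using pb apply simp
      using c1 apply simp
      using a(4) apply simp
      using noin apply blast
      apply (rule t_after[OF s0])
      using pb apply simp
      using False s0 by (simp add: endtr_def reach_cf_refl)
  qed
qed

definition nlits :: "cnf \<Rightarrow> nat" where "nlits F = sum_list (map length F)"

lemma cnf_run:
  "x = pre @ enc_cnf F \<Longrightarrow> (pre = [] \<or> last pre \<notin> {S0,S1}) \<Longrightarrow> 0 < c \<Longrightarrow> length (bin (c + nlits F)) < s \<Longrightarrow>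
   reach k x s (cf (P ClBegin) (length pre + 1) (tape_of (bin c)) 0 out)
     (cf (P ClBegin) (length x + 1) (tape_of (bin (c + nlits F))) 0 (out @ enc_nae (concat (map (amp k) (g0_cnf c F)))))"
proof (induction F arbitrary: pre c out)
  case Nil
  have "0 < s" using Nil.prems(4) by simp
  then show ?case using Nil by (simp add: reach_cf_refl enc_cnf_def nlits_def enc_nae_def)
next
  case (Cons C F)
  let ?pre = "pre @ concat (map enc_lit C) @ [SEndClause]"
  have x: "x = pre @ concat (map enc_lit C) @ SEndClause # enc_cnf F" using Cons.prems(1) by (simp add: enc_cnf_def)
  have b1: "length (bin (c + length C)) < s"
    using Cons.prems(4) len_bin_mono[of "c + length C" "c + nlits (C#F)"] by (simp add: nlits_def)
  have r1: "reach k x s (cf (P ClBegin) (length pre + 1) (tape_of (bin c)) 0 out)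
    (cf (P ClBegin) (length pre + length (concat (map enc_lit C)) + 2) (tape_of (bin (c + length C))) 0
      (out @ enc_nae (concat (map (amp k) (g0_lits True c C @ [tval 0 (c + length C) (endtr C)])))))"
    by (rule clause_run[OF x Cons.prems(2,3) b1])
  have x2: "x = ?pre @ enc_cnf F" using x by simp
  have nd2: "?pre = [] \<or> last ?pre \<notin> {S0,S1}" by simp
  have b2: "length (bin (c + length C + nlits F)) < s" using Cons.prems(4) by (simp add: nlits_def add.assoc)
  have c2: "0 < c + length C" using Cons.prems(3) by simp
  have r2: "reach k x s (cf (P ClBegin) (length pre + length (concat (map enc_lit C)) + 2) (tape_of (bin (c + length C))) 0
      (out @ enc_nae (concat (map (amp k) (g0_lits True c C @ [tval 0 (c + length C) (endtr C)])))))
     (cf (P ClBegin) (length x + 1) (tape_of (bin (c + length C + nlits F))) 0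
      ((out @ enc_nae (concat (map (amp k) (g0_lits True c C @ [tval 0 (c + length C) (endtr C)])))) @
        enc_nae (concat (map (amp k) (g0_cnf (c + length C) F)))))"
    using Cons.IH[OF x2 nd2 c2 b2, where out="out @ enc_nae (concat (map (amp k) (g0_lits True c C @ [tval 0 (c + length C) (endtr C)])))"]
    by simp
  have e: "c + length C + nlits F = c + nlits (C # F)" by (simp add: nlits_def)
  show ?case using reach_trans[OF r1 r2] unfolding e by (simp add: add.assoc)
qed

lemma nlits_le: "nlits F \<le> length (enc_cnf F)"
proof (induction F)
  case Nil then show ?case by (simp add: nlits_def enc_cnf_def)
next
  case (Cons C F)
  have "length C \<le> length (concat (map enc_lit C))"
  proof (induction C)
    case Nil then show ?case by simp
  next
    case (Cons l C)
    have "enc_lit l \<noteq> []" using enc_lit_hd by blast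
    then have "0 < length (enc_lit l)" by simp
    moreover have "length (concat (map enc_lit (l # C))) = length (enc_lit l) + length (concat (map enc_lit C))" by simp
    moreover have "length (l # C) = Suc (length C)" by simp
    ultimately show ?case using Cons by linarith
  qed
  then show ?case using Cons by (simp add: nlits_def enc_cnf_def)
qed

lemma full_run:
  "computes_in_space (M k) (enc_cnf I) (enc_nae (gred k I)) (2 * floor_log (length (enc_cnf I) + 2) + 2)"
proof -
  define x where "x = enc_cnf I"
  define s where "s = 2 * floor_log (length x + 2) + 2"
  have lb: "length (bin (1 + nlits I)) < s"
  proof -
    have "1 + nlits I \<le> length x + 2" using nlits_le[of I] by (simp add: x_def)
    then have "floor_log (1 + nlits I) \<le> floor_log (length x + 2)" using floor_log_mono by (simp add: mono_def)
    then show ?thesis by (simp add: len_bin s_def)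
  qed
  have s0: "0 < s" by (simp add: s_def)
  have tp: "(\<lambda>_. 0::nat)(0 := 4) = tape_of (bin 1)"
    by (rule ext) (simp add: bin_lt2 tape_of_def)
  have R: "reach k x s (cf (P ClBegin) (length [] + 1) (tape_of (bin 1)) 0 [])
     (cf (P ClBegin) (length x + 1) (tape_of (bin (1 + nlits I))) 0 ([] @ enc_nae (concat (map (amp k) (g0_cnf 1 I)))))"
    using cnf_run[where x=x and pre="[]" and F=I and c=1 and s=s and k=k and out="[]"] lb by (simp add: x_def)
  have R': "reach k x s (cf (P ClBegin) (Suc 0) (tape_of (bin 1)) 0 [])
     (cf (P ClBegin) (length x + 1) (tape_of (bin (1 + nlits I))) 0 (enc_nae (gred k I)))"
    using R by (simp add: gred_def)
  have rn: "read_in x (length x + 1) = None" by (simp add: read_in_def)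
  have main: "reach k x s (cf (P Init) 0 (\<lambda>_. 0) 0 []) (cf (P Halt) (length x + 1) (tape_of (bin (1 + nlits I))) 0 (enc_nae (gred k I)))"
    apply (rule t_init[OF s0])
    apply simp
    unfolding tp
    apply (rule reach_trans[OF R'])
    apply (rule t_clb_none[OF s0])
    apply simp
    using rn apply simp
    by (simp add: reach_cf_refl s0)
  then obtain t where t: "(step (M k) x ^^ t) (cf (P Init) 0 (\<lambda>_. 0) 0 []) =
      cf (P Halt) (length x + 1) (tape_of (bin (1 + nlits I))) 0 (enc_nae (gred k I))"
    "\<forall>t'\<le>t. whd ((step (M k) x ^^ t') (cf (P Init) 0 (\<lambda>_. 0) 0 [])) < s"
    unfolding reach_def by blast
  have init: "init_config (M k) = cf (P Init) 0 (\<lambda>_. 0) 0 []"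
    by (simp add: init_config_def M_def cf_def)
  show ?thesis unfolding computes_in_space_def
  proof (intro exI conjI)
    show "case run (M k) (enc_cnf I) t of (q, _, _, _, out) \<Rightarrow> halting (M k) q \<and> out = enc_nae (gred k I)"
    proof -
      have "run (M k) (enc_cnf I) t = cf (P Halt) (length x + 1) (tape_of (bin (1 + nlits I))) 0 (enc_nae (gred k I))"
        using t(1) unfolding run_def init x_def .
      then show ?thesis by (simp add: cf_def M_def)
    qed
    show "\<forall>t'\<le>t. case run (M k) (enc_cnf I) t' of (_, _, _, wh, _) \<Rightarrow> wh < 2 * floor_log (length (enc_cnf I) + 2) + 2"
    proof (intro allI impI)
      fix t' assume "t' \<le> t"
      then have w: "whd ((step (M k) x ^^ t') (cf (P Init) 0 (\<lambda>_. 0) 0 [])) < s" using t(2) by blast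
      have "run (M k) (enc_cnf I) t' = (step (M k) x ^^ t') (cf (P Init) 0 (\<lambda>_. 0) 0 [])"
        unfolding run_def init x_def ..
      then show "case run (M k) (enc_cnf I) t' of (_, _, _, wh, _) \<Rightarrow> wh < 2 * floor_log (length (enc_cnf I) + 2) + 2"
        using w unfolding whd_def s_def x_def by (simp split: prod.splits)
    qed
  qed
qed

theorem theorem4p1:
  fixes k :: nat
  assumes "k > 0"
  shows "\<exists>f. logspace_reduction_SAT_NAE (3 * k + 3) f \<and>
             (\<forall>I. \<not> cnf_sat I \<longrightarrow> \<not> nae_sat (f I)) \<and>
             (\<forall>I. cnf_sat I \<longrightarrow> robust_nae_sat k (f I))"
proof -
  have iff: "cnf_sat I \<longleftrightarrow> nae_sat (gred k I)" for I
  proof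
    assume "cnf_sat I"
    then obtain s where "\<forall>t \<in> set (g0_cnf 1 I). NAE3 s t" using cnf_sat_g0 by blast
    then show "nae_sat (gred k I)" unfolding gred_def by (rule amp_sat)
  next
    assume "nae_sat (gred k I)"
    then obtain \<alpha> where "nae_sat_by (concat (map (amp k) (g0_cnf 1 I))) \<alpha>" by (auto simp: nae_sat_def gred_def)
    then have "\<forall>t\<in>set (g0_cnf 1 I). NAE3 (maj k \<alpha>) t" by (rule amp_sound)
    then show "cnf_sat I" by (rule g0_sat_cnf)
  qed
  have m: "is_nae_m (3 * k + 3) (gred k I)" for I
    unfolding is_nae_m_def gred_def using amp_length by auto
  have lr: "logspace_reduction_SAT_NAE (3 * k + 3) (gred k)"
    unfolding logspace_reduction_SAT_NAE_def
  proof (intro conjI allI exI)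
    show "is_nae_m (3 * k + 3) (gred k I)" for I by (rule m)
    show "cnf_sat I \<longleftrightarrow> nae_sat (gred k I)" for I by (rule iff)
    show "wf_ltm (M k)" by (rule wf_M)
    show "computes_in_space (M k) (enc_cnf I) (enc_nae (gred k I)) (2 * floor_log (length (enc_cnf I) + 2) + 2)" for I
      by (rule full_run)
  qed
  have rb: "cnf_sat I \<Longrightarrow> robust_nae_sat k (gred k I)" for I
  proof -
    assume "cnf_sat I"
    then obtain s where "\<forall>t \<in> set (g0_cnf 1 I). NAE3 s t" using cnf_sat_g0 by blast
    then show ?thesis unfolding gred_def using amp_robust assms by blast
  qed
  show ?thesis using lr iff rb by blast
qed

end
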